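(* Assume (A1)–(A3) and consider the iterates of SMVR with an arbitrary sequence $\beta_t\in[0,1]$. Then for every $t\ge2$ and every $i\in\{1,\dots,K\}$, $$\mathbb{E}\|\mathbf{v}_t^i-\nabla f_i(\mathbf{u}_t^{i-1})\|^2\le(1-\beta_t)\,\mathbb{E}\|\mathbf{v}_{t-1}^i-\nabla f_i(\mathbf{u}_{t-1}^{i-1})\|^2+2\beta_t^2\sigma_J^2+2\mathcal{L}_J^2\,\mathbb{E}\|\mathbf{u}_t^{i-1}-\mathbf{u}_{t-1}^{i-1}\|^2,$$ $$\mathbb{E}\|\mathbf{u}_t^i-f_i(\mathbf{u}_t^{i-1})\|^2\le(1-\beta_t)\,\mathbb{E}\|\mathbf{u}_{t-1}^i-f_i(\mathbf{u}_{t-1}^{i-1})\|^2+2\beta_t^2\sigma_f^2+2\mathcal{L}_f^2\,\mathbb{E}\|\mathbf{u}_t^{i-1}-\mathbf{u}_{t-1}^{i-1}\|^2.$$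
   Context: Setting: $K\ge1$, $d_0=d$, $d_K=1$, $f_i:\mathbb{R}^{d_{i-1}}\to\mathbb{R}^{d_i}$, $F=f_K\circ\cdots\circ f_1$; $\nabla g(x)\in\mathbb{R}^{m\times n}$ is the transposed Jacobian of $g:\mathbb{R}^m\to\mathbb{R}^n$; vector norms Euclidean, matrix norms Frobenius. For each level $i$ there is a stochastic oracle: for a random sample $\xi\sim\mathcal{D}_i$ one can evaluate $f_i(\cdot;\xi)$ and $\nabla f_i(\cdot;\xi)$. Assumptions: (A1) each $f_i$ is $L_f$-Lipschitz, $\|\nabla f_i(x)\|\le L_f$ for all $x$, and $\nabla f_i$ is $L_J$-Lipschitz. (A2) for all $x$: $\mathbb{E}_\xi f_i(x;\xi)=f_i(x)$, $\mathbb{E}_\xi\nabla f_i(x;\xi)=\nabla f_i(x)$, $\mathbb{E}_\xi\|f_i(x;\xi)-f_i(x)\|^2\le\sigma_f^2$, $\mathbb{E}_\xi\|\nabla f_i(x;\xi)-\nabla f_i(x)\|^2\le\sigma_J^2$. (A3) for all $x,y$: $\mathbb{E}_\xi\|f_i(x;\xi)-f_i(y;\xi)\|^2\le\mathcal{L}_f^2\|x-y\|^2$ and $\mathbb{E}_\xi\|\nabla f_i(x;\xi)-\nabla f_i(y;\xi)\|^2\le\mathcal{L}_J^2\|x-y\|^2$. SMVR: given $\mathbf{w}_1$, step sizes $\eta_t>0$ and $\beta_t\in(0,1]$: at iteration $t$ draw $\xi_t^1,\dots,\xi_t^K$ ($\xi_t^i\sim\mathcal{D}_i$), mutually independent and independent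 of the past; set $\mathbf{u}_t^0=\mathbf{w}_t$. For $t=1$: $\mathbf{u}_1^i=f_i(\mathbf{u}_1^{i-1};\xi_1^i)$, $\mathbf{v}_1^i=\Pi_{L_f}[\nabla f_i(\mathbf{u}_1^{i-1};\xi_1^i)]$. For $t\ge2$, $i=1,\dots,K$: $\mathbf{u}_t^i=(1-\beta_t)\mathbf{u}_{t-1}^i+\beta_tf_i(\mathbf{u}_t^{i-1};\xi_t^i)+(1-\beta_t)\big(f_i(\mathbf{u}_t^{i-1};\xi_t^i)-f_i(\mathbf{u}_{t-1}^{i-1};\xi_t^i)\big)$ and $\mathbf{v}_t^i=\Pi_{L_f}\big[(1-\beta_t)\mathbf{v}_{t-1}^i+\beta_t\nabla f_i(\mathbf{u}_t^{i-1};\xi_t^i)+(1-\beta_t)\big(\nabla f_i(\mathbf{u}_t^{i-1};\xi_t^i)-\nabla f_i(\mathbf{u}_{t-1}^{i-1};\xi_t^i)\big)\big]$. Then $\mathbf{v}_t=\mathbf{v}_t^1\cdots\mathbf{v}_t^K$ and $\mathbf{w}_{t+1}=\mathbf{w}_t-\eta_t\mathbf{v}_t$. $\Pi_{L_f}$ is the Euclidean (Frobenius) projection onto the closed ball of radius $L_f$. *)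

theory Defs
  imports "HOL-Probability.Probability"
begin

text \<open>Vectors of R^n are represented as functions nat => real supported on {..<n};
  n x m matrices as functions nat => nat => real supported on {..<n} x {..<m}.\<close>

type_synonym vec = "nat \<Rightarrow> real"
type_synonym mat = "nat \<Rightarrow> nat \<Rightarrow> real"

definition vecs :: "nat \<Rightarrow> vec set" where
  "vecs n = {x. \<forall>j\<ge>n. x j = 0}"

definition mats :: "nat \<Rightarrow> nat \<Rightarrow> mat set" where
  "mats m n = {A. \<forall>j k. (m \<le> j \<or> n \<le> k) \<longrightarrow> A j k = 0}"

definition vnorm :: "nat \<Rightarrow> vec \<Rightarrow> real" where
  "vnorm n x = sqrt (\<Sum>j<n. (x j)\<^sup>2)"

definition fnorm :: "nat \<Rightarrow> nat \<Rightarrow> mat \<Rightarrow> real" where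
  "fnorm m n A = sqrt (\<Sum>j<m. \<Sum>k<n. (A j k)\<^sup>2)"

definition proj_ball :: "nat \<Rightarrow> nat \<Rightarrow> real \<Rightarrow> mat \<Rightarrow> mat" where
  "proj_ball m n r A = (THE B. B \<in> mats m n \<and> fnorm m n B \<le> r \<and>
      (\<forall>C\<in>mats m n. fnorm m n C \<le> r \<longrightarrow>
          fnorm m n (\<lambda>j k. A j k - B j k) \<le> fnorm m n (\<lambda>j k. A j k - C j k)))"

text \<open>Transposed Jacobian: G x is the m x n matrix with G x j k = d g_k / d x_j,
  so g (x + h) = g x + (G x)^T h + o(|h|).\<close>
definition tjac_apply :: "nat \<Rightarrow> mat \<Rightarrow> vec \<Rightarrow> vec" where
  "tjac_apply m A h = (\<lambda>k. \<Sum>j<m. A j k * h j)"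

definition is_tjacobian :: "nat \<Rightarrow> nat \<Rightarrow> (vec \<Rightarrow> vec) \<Rightarrow> (vec \<Rightarrow> mat) \<Rightarrow> bool" where
  "is_tjacobian m n g G \<longleftrightarrow>
     (\<forall>x\<in>vecs m. \<forall>e>0. \<exists>\<delta>>0. \<forall>h\<in>vecs m. vnorm m h < \<delta> \<longrightarrow>
        vnorm n (\<lambda>k. g (\<lambda>j. x j + h j) k - g x k - tjac_apply m (G x) h k) \<le> e * vnorm m h)"

definition mmul :: "nat \<Rightarrow> mat \<Rightarrow> mat \<Rightarrow> mat" where
  "mmul n A B = (\<lambda>j k. \<Sum>l<n. A j l * B l k)"

primrec chain :: "(nat \<Rightarrow> nat) \<Rightarrow> (nat \<Rightarrow> mat) \<Rightarrow> nat \<Rightarrow> mat" where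
  "chain d V 0 = (\<lambda>j k. if j = k then 1 else 0)"
| "chain d V (Suc i) = mmul (d i) (chain d V i) (V (Suc i))"

text \<open>v_t = v_t^1 ... v_t^K, a d_0 x 1 matrix, read as a vector.\<close>
definition dirvec :: "(nat \<Rightarrow> nat) \<Rightarrow> nat \<Rightarrow> (nat \<Rightarrow> mat) \<Rightarrow> vec" where
  "dirvec d K V = (\<lambda>j. chain d V K j 0)"

text \<open>One SMVR iteration.  fo i x s = f_i(x; s), Jo i x s = nabla f_i(x; s);
  s i is the sample of level i drawn in this iteration; U 0 = w_t.\<close>
primrec smvr_U1 :: "(nat \<Rightarrow> vec \<Rightarrow> 'a \<Rightarrow> vec) \<Rightarrow> vec \<Rightarrow> (nat \<Rightarrow> 'a) \<Rightarrow> nat \<Rightarrow> vec" where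
  "smvr_U1 fo w s 0 = w"
| "smvr_U1 fo w s (Suc i) = fo (Suc i) (smvr_U1 fo w s i) (s (Suc i))"

definition smvr_V1 :: "(nat \<Rightarrow> nat) \<Rightarrow> real \<Rightarrow> (nat \<Rightarrow> vec \<Rightarrow> 'a \<Rightarrow> mat) \<Rightarrow> (nat \<Rightarrow> vec)
    \<Rightarrow> (nat \<Rightarrow> 'a) \<Rightarrow> nat \<Rightarrow> mat" where
  "smvr_V1 d Lf Jo U s i = proj_ball (d (i - 1)) (d i) Lf (Jo i (U (i - 1)) (s i))"

primrec smvr_Un :: "(nat \<Rightarrow> vec \<Rightarrow> 'a \<Rightarrow> vec) \<Rightarrow> real \<Rightarrow> (nat \<Rightarrow> vec) \<Rightarrow> vec \<Rightarrow> (nat \<Rightarrow> 'a)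
    \<Rightarrow> nat \<Rightarrow> vec" where
  "smvr_Un fo b Up w s 0 = w"
| "smvr_Un fo b Up w s (Suc i) =
     (\<lambda>k. (1 - b) * Up (Suc i) k + b * fo (Suc i) (smvr_Un fo b Up w s i) (s (Suc i)) k
          + (1 - b) * (fo (Suc i) (smvr_Un fo b Up w s i) (s (Suc i)) k
                       - fo (Suc i) (Up i) (s (Suc i)) k))"

definition smvr_Vn :: "(nat \<Rightarrow> nat) \<Rightarrow> real \<Rightarrow> (nat \<Rightarrow> vec \<Rightarrow> 'a \<Rightarrow> mat) \<Rightarrow> real
    \<Rightarrow> (nat \<Rightarrow> vec) \<Rightarrow> (nat \<Rightarrow> mat) \<Rightarrow> (nat \<Rightarrow> vec) \<Rightarrow> (nat \<Rightarrow> 'a) \<Rightarrow> nat \<Rightarrow> mat" where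
  "smvr_Vn d Lf Jo b Up Vp U s i = proj_ball (d (i - 1)) (d i) Lf
     (\<lambda>j k. (1 - b) * Vp i j k + b * Jo i (U (i - 1)) (s i) j k
          + (1 - b) * (Jo i (U (i - 1)) (s i) j k - Jo i (Up (i - 1)) (s i) j k))"

text \<open>smvr ... xs t = (U_t, V_t) for t >= 1, where U_t i = u_t^i (U_t 0 = w_t) and
  V_t i = v_t^i; xs t i is the sample xi_t^i.  The value at t = 0 is a dummy.\<close>
primrec smvr :: "(nat \<Rightarrow> nat) \<Rightarrow> nat \<Rightarrow> real \<Rightarrow> (nat \<Rightarrow> vec \<Rightarrow> 'a \<Rightarrow> vec)
    \<Rightarrow> (nat \<Rightarrow> vec \<Rightarrow> 'a \<Rightarrow> mat) \<Rightarrow> (nat \<Rightarrow> real) \<Rightarrow> (nat \<Rightarrow> real) \<Rightarrow> vec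
    \<Rightarrow> (nat \<Rightarrow> nat \<Rightarrow> 'a) \<Rightarrow> nat \<Rightarrow> (nat \<Rightarrow> vec) \<times> (nat \<Rightarrow> mat)" where
  "smvr d K Lf fo Jo \<eta> \<beta> w1 xs 0 = (\<lambda>_. w1, \<lambda>_ _ _. 0)"
| "smvr d K Lf fo Jo \<eta> \<beta> w1 xs (Suc t) =
     (if t = 0 then
        (let U = smvr_U1 fo w1 (xs 1) in (U, smvr_V1 d Lf Jo U (xs 1)))
      else
        (let (Up, Vp) = smvr d K Lf fo Jo \<eta> \<beta> w1 xs t;
             vt = dirvec d K Vp;
             w = (\<lambda>j. Up 0 j - \<eta> t * vt j);
             U = smvr_Un fo (\<beta> (Suc t)) Up w (xs (Suc t))
         in (U, smvr_Vn d Lf Jo (\<beta> (Suc t)) Up Vp U (xs (Suc t)))))"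

end

theory Submission
  imports Defs
begin
lemma fnorm_L2: "fnorm m n A = L2_set (\<lambda>(j,k). A j k) ({..<m}\<times>{..<n})"
  unfolding fnorm_def L2_set_def
  by (simp add: sum.cartesian_product case_prod_beta)

lemma fnorm_sq: "(fnorm m n A)\<^sup>2 = (\<Sum>(j,k)\<in>{..<m}\<times>{..<n}. (A j k)\<^sup>2)"
proof -
  have "0 \<le> (\<Sum>j<m. \<Sum>k<n. (A j k)\<^sup>2)" by (intro sum_nonneg) auto
  then show ?thesis unfolding fnorm_def by (simp add: sum.cartesian_product)
qed

lemma vnorm_sq: "(vnorm n x)\<^sup>2 = (\<Sum>k<n. (x k)\<^sup>2)"
  unfolding vnorm_def by (simp add: sum_nonneg)

lemma L2_sq: "(L2_set f S)\<^sup>2 = (\<Sum>k\<in>S. (f k)\<^sup>2)"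
  unfolding L2_set_def by (simp add: sum_nonneg)

lemma proj_key:
  fixes S :: "'i set" and a c :: "'i \<Rightarrow> real"
  assumes fin: "finite S" and r: "0 \<le> r" and c: "L2_set c S \<le> r"
  defines "s \<equiv> min 1 (r / L2_set a S)"
  shows "(\<Sum>k\<in>S. (a k - s*a k)*(c k - s*a k)) \<le> 0" "L2_set (\<lambda>k. s*a k) S \<le> r"
proof -
  let ?N = "L2_set a S"
  have N0: "0 \<le> ?N" by (simp add: L2_set_nonneg)
  have "(\<Sum>k\<in>S. (a k - s*a k)*(c k - s*a k)) \<le> 0 \<and> L2_set (\<lambda>k. s*a k) S \<le> r"
  proof (cases "?N \<le> r")
    case True
    show ?thesis
    proof (cases "?N = 0")
      case True
      then have "\<forall>k\<in>S. a k = 0" using fin unfolding L2_set_def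
        by (simp add: sum_nonneg_eq_0_iff)
      then show ?thesis using r by (simp add: L2_set_def)
    next
      case False
      with N0 have "?N > 0" by linarith
      with \<open>?N \<le> r\<close> have "r / ?N \<ge> 1" by (simp add: le_divide_eq)
      then have "s = 1" unfolding s_def by simp
      then show ?thesis using True by simp
    qed
  next
    case False
    then have Npos: "?N > r" "?N > 0" using r by auto
    then have s: "s = r / ?N" unfolding s_def by simp
    have s01: "0 \<le> s" "s \<le> 1" using Npos r s by auto
    have "(\<Sum>k\<in>S. (a k - s*a k)*(c k - s*a k)) = (\<Sum>k\<in>S. (1-s)*(a k * c k - s*(a k)\<^sup>2))"
      by (rule sum.cong) (auto simp: algebra_simps power2_eq_square)
    also have "\<dots> = (1-s) * (\<Sum>k\<in>S. (a k * c k - s*(a k)\<^sup>2))"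
      by (simp add: sum_distrib_left)
    also have "(\<Sum>k\<in>S. (a k * c k - s*(a k)\<^sup>2)) = (\<Sum>k\<in>S. a k * c k) - s * (\<Sum>k\<in>S. (a k)\<^sup>2)"
      by (simp add: sum_subtractf sum_distrib_left)
    also have "(\<Sum>k\<in>S. (a k)\<^sup>2) = ?N\<^sup>2" by (simp add: L2_sq)
    also have "s * ?N\<^sup>2 = r * ?N" using s Npos by (simp add: power2_eq_square)
    also have "(\<Sum>k\<in>S. a k * c k) \<le> ?N * r"
    proof -
      have "(\<Sum>k\<in>S. a k * c k) \<le> (\<Sum>k\<in>S. \<bar>a k\<bar> * \<bar>c k\<bar>)"
        by (intro sum_mono) (metis abs_ge_self abs_mult)
      also have "\<dots> \<le> ?N * L2_set c S" by (rule L2_set_mult_ineq)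
      also have "\<dots> \<le> ?N * r" using c N0 by (simp add: mult_left_mono)
      finally show ?thesis .
    qed
    then have "(1-s) * ((\<Sum>k\<in>S. a k * c k) - r * ?N) \<le> 0"
      using s01 by (intro mult_nonneg_nonpos) (auto simp: mult.commute)
    moreover have "L2_set (\<lambda>k. s*a k) S \<le> r"
    proof -
      have "L2_set (\<lambda>k. s*a k) S = s * ?N" using s01
        by (simp add: L2_set_def power_mult_distrib sum_distrib_left[symmetric] real_sqrt_mult)
      then show ?thesis using s Npos by simp
    qed
    ultimately show ?thesis by (simp add: mult_nonneg_nonpos)
  qed
  then show "(\<Sum>k\<in>S. (a k - s*a k)*(c k - s*a k)) \<le> 0" "L2_set (\<lambda>k. s*a k) S \<le> r" by auto
qed

lemma proj_pyth:
  fixes S :: "'i set" and a c :: "'i \<Rightarrow> real"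
  assumes fin: "finite S" and r: "0 \<le> r" and c: "L2_set c S \<le> r"
  defines "s \<equiv> min 1 (r / L2_set a S)"
  shows "(\<Sum>k\<in>S. (a k - s*a k)\<^sup>2) + (\<Sum>k\<in>S. (s*a k - c k)\<^sup>2) \<le> (\<Sum>k\<in>S. (a k - c k)\<^sup>2)"
proof -
  have key: "(\<Sum>k\<in>S. (a k - s*a k)*(c k - s*a k)) \<le> 0"
    using proj_key[OF fin r c] unfolding s_def by simp
  have "(\<Sum>k\<in>S. (a k - c k)\<^sup>2) = (\<Sum>k\<in>S. (a k - s*a k)\<^sup>2) + (\<Sum>k\<in>S. (s*a k - c k)\<^sup>2)
        - 2 * (\<Sum>k\<in>S. (a k - s*a k)*(c k - s*a k))"
    by (simp add: sum_distrib_left sum.distrib[symmetric] sum_subtractf[symmetric] power2_eq_square algebra_simps)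
  with key show ?thesis by simp
qed

definition pb :: "nat \<Rightarrow> nat \<Rightarrow> real \<Rightarrow> mat \<Rightarrow> mat" where
  "pb m n r A = (\<lambda>j k. if j < m \<and> k < n then min 1 (r / fnorm m n A) * A j k else 0)"

lemma pb_pyth:
  assumes r: "0 \<le> r" and C: "fnorm m n C \<le> r"
  shows "(fnorm m n (\<lambda>j k. A j k - pb m n r A j k))\<^sup>2 + (fnorm m n (\<lambda>j k. pb m n r A j k - C j k))\<^sup>2
     \<le> (fnorm m n (\<lambda>j k. A j k - C j k))\<^sup>2"
proof -
  let ?S = "{..<m}\<times>{..<n}"
  let ?a = "\<lambda>(j,k). A j k" and ?c = "\<lambda>(j,k). C j k"
  have c: "L2_set ?c ?S \<le> r" using C by (simp add: fnorm_L2)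
  let ?s = "min 1 (r / L2_set ?a ?S)"
  have "(\<Sum>q\<in>?S. (?a q - ?s*?a q)\<^sup>2) + (\<Sum>q\<in>?S. (?s*?a q - ?c q)\<^sup>2) \<le> (\<Sum>q\<in>?S. (?a q - ?c q)\<^sup>2)"
    using proj_pyth[OF _ r c, of ?a] by simp
  moreover have "(\<Sum>q\<in>?S. (?a q - pb m n r A (fst q) (snd q))\<^sup>2) = (\<Sum>q\<in>?S. (?a q - ?s*?a q)\<^sup>2)"
    by (rule sum.cong) (auto simp: pb_def fnorm_L2)
  moreover have "(\<Sum>q\<in>?S. (pb m n r A (fst q) (snd q) - ?c q)\<^sup>2) = (\<Sum>q\<in>?S. (?s*?a q - ?c q)\<^sup>2)"
    by (rule sum.cong) (auto simp: pb_def fnorm_L2)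
  ultimately show ?thesis unfolding fnorm_sq
    by (simp add: case_prod_beta)
qed

lemma pb_mats: "pb m n r A \<in> mats m n" by (auto simp: pb_def mats_def)

lemma pb_norm:
  assumes r: "0 \<le> r" shows "fnorm m n (pb m n r A) \<le> r"
proof -
  let ?S = "{..<m}\<times>{..<n}"
  let ?a = "\<lambda>(j,k). A j k"
  have "L2_set (\<lambda>q. min 1 (r / L2_set ?a ?S) * ?a q) ?S \<le> r"
    using proj_key(2)[OF _ r, where c="\<lambda>_. 0" and S="?S" and a="?a"] r by (simp add: L2_set_def)
  moreover have "L2_set (\<lambda>(j,k). pb m n r A j k) ?S = L2_set (\<lambda>q. min 1 (r / L2_set ?a ?S) * ?a q) ?S"
    by (rule L2_set_cong) (auto simp: pb_def fnorm_L2)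
  ultimately show ?thesis unfolding fnorm_L2 by simp
qed

lemma fnorm_zero_mats:
  assumes "B \<in> mats m n" "B' \<in> mats m n" "fnorm m n (\<lambda>j k. B j k - B' j k) \<le> 0"
  shows "B = B'"
proof -
  have "0 \<le> (\<Sum>j<m. \<Sum>k<n. (B j k - B' j k)\<^sup>2)" by (intro sum_nonneg) auto
  then have "(fnorm m n (\<lambda>j k. B j k - B' j k))\<^sup>2 = 0"
    using assms(3) by (simp add: fnorm_def)
  then have "\<forall>q\<in>{..<m}\<times>{..<n}. (case q of (j,k) \<Rightarrow> (B j k - B' j k)\<^sup>2) = 0"
    unfolding fnorm_sq by (subst (asm) sum_nonneg_eq_0_iff) auto
  then have "\<forall>j k. j < m \<longrightarrow> k < n \<longrightarrow> B j k = B' j k" by auto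
  with assms(1,2) show ?thesis unfolding mats_def by (auto simp: fun_eq_iff) (metis not_le)
qed

lemma proj_ball_eq:
  assumes r: "0 \<le> r" shows "proj_ball m n r A = pb m n r A"
  unfolding proj_ball_def
proof (rule the_equality)
  show "pb m n r A \<in> mats m n \<and> fnorm m n (pb m n r A) \<le> r \<and>
    (\<forall>C\<in>mats m n. fnorm m n C \<le> r \<longrightarrow>
       fnorm m n (\<lambda>j k. A j k - pb m n r A j k) \<le> fnorm m n (\<lambda>j k. A j k - C j k))"
  proof (intro conjI ballI impI pb_mats pb_norm r)
    fix C assume "fnorm m n C \<le> r"
    from pb_pyth[OF r this, of A] have "(fnorm m n (\<lambda>j k. A j k - pb m n r A j k))\<^sup>2
       \<le> (fnorm m n (\<lambda>j k. A j k - C j k))\<^sup>2"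
      by (smt (verit) zero_le_power2)
    then show "fnorm m n (\<lambda>j k. A j k - pb m n r A j k) \<le> fnorm m n (\<lambda>j k. A j k - C j k)"
      by (simp add: fnorm_def real_sqrt_le_iff power2_le_iff_abs_le sum_nonneg)
  qed
next
  fix B assume B: "B \<in> mats m n \<and> fnorm m n B \<le> r \<and>
    (\<forall>C\<in>mats m n. fnorm m n C \<le> r \<longrightarrow>
       fnorm m n (\<lambda>j k. A j k - B j k) \<le> fnorm m n (\<lambda>j k. A j k - C j k))"
  then have "fnorm m n (\<lambda>j k. A j k - B j k) \<le> fnorm m n (\<lambda>j k. A j k - pb m n r A j k)"
    using pb_mats pb_norm[OF r] by blast
  moreover have "(fnorm m n (\<lambda>j k. A j k - pb m n r A j k))\<^sup>2 + (fnorm m n (\<lambda>j k. pb m n r A j k - B j k))\<^sup>2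
     \<le> (fnorm m n (\<lambda>j k. A j k - B j k))\<^sup>2" using pb_pyth[OF r] B by blast
  moreover have "0 \<le> fnorm m n (\<lambda>j k. A j k - B j k)" by (simp add: fnorm_def sum_nonneg)
  ultimately have "(fnorm m n (\<lambda>j k. pb m n r A j k - B j k))\<^sup>2 \<le> 0"
    by (smt (verit) power_mono)
  then have "fnorm m n (\<lambda>j k. pb m n r A j k - B j k) \<le> 0" by simp
  then show "B = pb m n r A" using fnorm_zero_mats[OF pb_mats] B by metis
qed

lemma G1:
  fixes Dm :: "'a measure" and S :: "'i set" and Z :: "'a \<Rightarrow> 'i \<Rightarrow> real" and a :: "'i \<Rightarrow> real"
  assumes Dm: "prob_space Dm" and fin: "finite S"
    and Zi: "\<forall>k\<in>S. integrable Dm (\<lambda>y. Z y k)"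
    and Z2: "integrable Dm (\<lambda>y. \<Sum>k\<in>S. (Z y k)\<^sup>2)"
  shows "integrable Dm (\<lambda>y. \<Sum>k\<in>S. (a k + Z y k)\<^sup>2)"
    "(\<integral>y. (\<Sum>k\<in>S. (a k + Z y k)\<^sup>2) \<partial>Dm) =
       (\<Sum>k\<in>S. (a k)\<^sup>2) + 2 * (\<Sum>k\<in>S. a k * (\<integral>y. Z y k \<partial>Dm)) + (\<integral>y. (\<Sum>k\<in>S. (Z y k)\<^sup>2) \<partial>Dm)"
proof -
  interpret prob_space Dm by (rule Dm)
  have pw: "(\<lambda>y. \<Sum>k\<in>S. (a k + Z y k)\<^sup>2) =
     (\<lambda>y. (\<Sum>k\<in>S. (a k)\<^sup>2) + (\<Sum>k\<in>S. 2 * a k * Z y k) + (\<Sum>k\<in>S. (Z y k)\<^sup>2))"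
    by (auto simp: fun_eq_iff sum.distrib[symmetric] power2_eq_square algebra_simps)
  have i2: "integrable Dm (\<lambda>y. \<Sum>k\<in>S. 2 * a k * Z y k)"
  proof (rule Bochner_Integration.integrable_sum)
    fix k assume "k \<in> S"
    then show "integrable Dm (\<lambda>y. 2 * a k * Z y k)" using Zi by auto
  qed
  show "integrable Dm (\<lambda>y. \<Sum>k\<in>S. (a k + Z y k)\<^sup>2)"
    unfolding pw using i2 Z2 by (intro Bochner_Integration.integrable_add) auto
  have "(\<integral>y. (\<Sum>k\<in>S. 2 * a k * Z y k) \<partial>Dm) = (\<Sum>k\<in>S. 2 * a k * (\<integral>y. Z y k \<partial>Dm))"
    using Zi by (subst Bochner_Integration.integral_sum) auto
  also have "\<dots> = 2 * (\<Sum>k\<in>S. a k * (\<integral>y. Z y k \<partial>Dm))"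
    by (simp add: sum_distrib_left mult.assoc)
  finally have e: "(\<integral>y. (\<Sum>k\<in>S. 2 * a k * Z y k) \<partial>Dm) = 2 * (\<Sum>k\<in>S. a k * (\<integral>y. Z y k \<partial>Dm))" .
  show "(\<integral>y. (\<Sum>k\<in>S. (a k + Z y k)\<^sup>2) \<partial>Dm) =
       (\<Sum>k\<in>S. (a k)\<^sup>2) + 2 * (\<Sum>k\<in>S. a k * (\<integral>y. Z y k \<partial>Dm)) + (\<integral>y. (\<Sum>k\<in>S. (Z y k)\<^sup>2) \<partial>Dm)"
    unfolding pw using i2 Z2 e by (simp add: Bochner_Integration.integral_add prob_space)
qed

lemma nn_to_real:
  fixes f :: "'a \<Rightarrow> real"
  assumes "f \<in> borel_measurable Dm" "\<forall>y\<in>space Dm. 0 \<le> f y"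
    and "(\<integral>\<^sup>+y. ennreal (f y) \<partial>Dm) \<le> ennreal c" "0 \<le> c"
  shows "integrable Dm f" "(\<integral>y. f y \<partial>Dm) \<le> c"
proof -
  show i: "integrable Dm f"
    using assms by (intro integrableI_nonneg) (auto simp: top.not_eq_extremum order.strict_trans1)
  have "ennreal (\<integral>y. f y \<partial>Dm) = (\<integral>\<^sup>+y. ennreal (f y) \<partial>Dm)"
    using i assms(2) by (subst nn_integral_eq_integral) auto
  with assms(3) have "ennreal (\<integral>y. f y \<partial>Dm) \<le> ennreal c" by simp
  with assms(4) show "(\<integral>y. f y \<partial>Dm) \<le> c" by (simp add: ennreal_le_iff)
qed

lemma core:
  fixes Dm :: "'a measure" and S :: "'i set" and P Q W :: "'a \<Rightarrow> 'i \<Rightarrow> real"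
    and A p q :: "'i \<Rightarrow> real" and b \<sigma> L \<delta> :: real
  assumes Dm: "prob_space Dm" and fin: "finite S" and b: "0 \<le> b" "b \<le> 1"
    and Pm: "\<forall>k\<in>S. integrable Dm (\<lambda>y. P y k) \<and> (\<integral>y. P y k \<partial>Dm) = p k"
    and Qm: "\<forall>k\<in>S. integrable Dm (\<lambda>y. Q y k) \<and> (\<integral>y. Q y k \<partial>Dm) = q k"
    and var: "(\<integral>\<^sup>+y. ennreal (\<Sum>k\<in>S. (P y k - p k)\<^sup>2) \<partial>Dm) \<le> ennreal (\<sigma>\<^sup>2)"
    and lip: "(\<integral>\<^sup>+y. ennreal (\<Sum>k\<in>S. (P y k - Q y k)\<^sup>2) \<partial>Dm) \<le> ennreal (L\<^sup>2 * \<delta>\<^sup>2)"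
    and W: "\<forall>y\<in>space Dm. (\<Sum>k\<in>S. (W y k)\<^sup>2) \<le>
        (\<Sum>k\<in>S. ((1-b)*A k + b*(P y k - p k) + (1-b)*(P y k - Q y k - p k + q k))\<^sup>2)"
  shows "(\<integral>\<^sup>+y. ennreal (\<Sum>k\<in>S. (W y k)\<^sup>2) \<partial>Dm)
     \<le> ennreal (1-b) * ennreal (\<Sum>k\<in>S. (A k)\<^sup>2) + ennreal (2*b\<^sup>2*\<sigma>\<^sup>2) + ennreal (2*L\<^sup>2) * ennreal (\<delta>\<^sup>2)"
proof -
  interpret prob_space Dm by (rule Dm)
  have Pb: "\<And>k. k \<in> S \<Longrightarrow> (\<lambda>y. P y k) \<in> borel_measurable Dm" using Pm by auto
  have Qb: "\<And>k. k \<in> S \<Longrightarrow> (\<lambda>y. Q y k) \<in> borel_measurable Dm" using Qm by auto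
  note meas = Pb Qb
  have m1: "(\<lambda>y. \<Sum>k\<in>S. (P y k - p k)\<^sup>2) \<in> borel_measurable Dm"
    using meas by (intro borel_measurable_sum) auto
  have m2: "(\<lambda>y. \<Sum>k\<in>S. (P y k - Q y k)\<^sup>2) \<in> borel_measurable Dm"
    using meas by (intro borel_measurable_sum) auto
  have int1: "integrable Dm (\<lambda>y. \<Sum>k\<in>S. (P y k - p k)\<^sup>2)"
   and E1: "(\<integral>y. (\<Sum>k\<in>S. (P y k - p k)\<^sup>2) \<partial>Dm) \<le> \<sigma>\<^sup>2"
    using nn_to_real[OF m1 _ var] by (auto intro: sum_nonneg simp: sum_nonneg)
  have int2: "integrable Dm (\<lambda>y. \<Sum>k\<in>S. (P y k - Q y k)\<^sup>2)"
   and E2: "(\<integral>y. (\<Sum>k\<in>S. (P y k - Q y k)\<^sup>2) \<partial>Dm) \<le> L\<^sup>2 * \<delta>\<^sup>2"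
    using nn_to_real[OF m2 _ lip] by (auto intro: sum_nonneg simp: sum_nonneg)
  define C where "C y k = - (p k - q k) + (P y k - Q y k)" for y k
  have Di: "\<forall>k\<in>S. integrable Dm (\<lambda>y. P y k - Q y k)" using Pm Qm by auto
  have Dint: "(\<integral>y. (P y k - Q y k) \<partial>Dm) = p k - q k" if "k\<in>S" for k
    by (subst Bochner_Integration.integral_diff) (use Pm Qm that in auto)
  have intC: "integrable Dm (\<lambda>y. \<Sum>k\<in>S. (C y k)\<^sup>2)"
    unfolding C_def using G1(1)[OF Dm fin Di int2] .
  have "(\<integral>y. (\<Sum>k\<in>S. (C y k)\<^sup>2) \<partial>Dm) =
      (\<Sum>k\<in>S. (- (p k - q k))\<^sup>2) + 2 * (\<Sum>k\<in>S. - (p k - q k) * (\<integral>y. (P y k - Q y k) \<partial>Dm))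
      + (\<integral>y. (\<Sum>k\<in>S. (P y k - Q y k)\<^sup>2) \<partial>Dm)"
    unfolding C_def by (rule G1(2)[OF Dm fin Di int2])
  also have "\<dots> = (\<integral>y. (\<Sum>k\<in>S. (P y k - Q y k)\<^sup>2) \<partial>Dm) - (\<Sum>k\<in>S. (p k - q k)\<^sup>2)"
  proof -
    have "(\<Sum>k\<in>S. - (p k - q k) * (\<integral>y. (P y k - Q y k) \<partial>Dm)) = - (\<Sum>k\<in>S. (p k - q k)\<^sup>2)"
      by (simp add: Dint power2_eq_square sum_negf[symmetric] algebra_simps)
    moreover have "(\<Sum>k\<in>S. (- (p k - q k))\<^sup>2) = (\<Sum>k\<in>S. (p k - q k)\<^sup>2)" by (simp only: power2_minus)
    ultimately show ?thesis by linarith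
  qed
  also have "\<dots> \<le> L\<^sup>2 * \<delta>\<^sup>2" using E2 by (smt (verit) sum_nonneg zero_le_power2)
  finally have EC: "(\<integral>y. (\<Sum>k\<in>S. (C y k)\<^sup>2) \<partial>Dm) \<le> L\<^sup>2 * \<delta>\<^sup>2" .
  define B where "B y k = b*(P y k - p k) + (1-b)*(P y k - Q y k - p k + q k)" for y k
  have Bi: "\<forall>k\<in>S. integrable Dm (\<lambda>y. B y k)" unfolding B_def using Pm Qm by auto
  have B0: "\<forall>k\<in>S. (\<integral>y. B y k \<partial>Dm) = 0"
  proof
    fix k assume k: "k \<in> S"
    have "(\<integral>y. B y k \<partial>Dm) = b * ((\<integral>y. P y k \<partial>Dm) - p k) + (1-b) * ((\<integral>y. P y k \<partial>Dm) - (\<integral>y. Q y k \<partial>Dm) - p k + q k)"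
      unfolding B_def using Pm Qm k by (simp add: Bochner_Integration.integral_add Bochner_Integration.integral_diff prob_space)
    then show "(\<integral>y. B y k \<partial>Dm) = 0" using Pm Qm k by simp
  qed
  have Bpw: "(\<Sum>k\<in>S. (B y k)\<^sup>2) \<le> 2*b\<^sup>2 * (\<Sum>k\<in>S. (P y k - p k)\<^sup>2) + 2*(1-b)\<^sup>2 * (\<Sum>k\<in>S. (C y k)\<^sup>2)" for y
  proof -
    have "(\<Sum>k\<in>S. (B y k)\<^sup>2) \<le> (\<Sum>k\<in>S. 2*b\<^sup>2 * (P y k - p k)\<^sup>2 + 2*(1-b)\<^sup>2 * (C y k)\<^sup>2)"
    proof (rule sum_mono)
      fix k
      have "B y k = b*(P y k - p k) + (1-b)*C y k" unfolding B_def C_def by simp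
      moreover have "(xa + xb)\<^sup>2 \<le> 2*xa\<^sup>2 + 2*xb\<^sup>2" for xa xb :: real
        by (smt (verit) zero_le_power2 power2_diff power2_sum)
      ultimately show "(B y k)\<^sup>2 \<le> 2*b\<^sup>2 * (P y k - p k)\<^sup>2 + 2*(1-b)\<^sup>2 * (C y k)\<^sup>2"
        by (metis power_mult_distrib mult.assoc)
    qed
    then show ?thesis by (simp add: sum.distrib sum_distrib_left)
  qed
  have intBound: "integrable Dm (\<lambda>y. 2*b\<^sup>2 * (\<Sum>k\<in>S. (P y k - p k)\<^sup>2) + 2*(1-b)\<^sup>2 * (\<Sum>k\<in>S. (C y k)\<^sup>2))"
    using int1 intC by auto
  have mB: "(\<lambda>y. \<Sum>k\<in>S. (B y k)\<^sup>2) \<in> borel_measurable Dm"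
    using Bi by (intro borel_measurable_sum) auto
  have intB: "integrable Dm (\<lambda>y. \<Sum>k\<in>S. (B y k)\<^sup>2)"
  proof (rule Bochner_Integration.integrable_bound[OF intBound mB], rule AE_I2)
    fix y
    have "0 \<le> (\<Sum>k\<in>S. (B y k)\<^sup>2)" by (intro sum_nonneg) auto
    moreover have "0 \<le> (\<Sum>k\<in>S. (P y k - p k)\<^sup>2)" "0 \<le> (\<Sum>k\<in>S. (C y k)\<^sup>2)" by (intro sum_nonneg; auto)+
    ultimately show "norm (\<Sum>k\<in>S. (B y k)\<^sup>2) \<le> norm (2*b\<^sup>2 * (\<Sum>k\<in>S. (P y k - p k)\<^sup>2) + 2*(1-b)\<^sup>2 * (\<Sum>k\<in>S. (C y k)\<^sup>2))"
      using Bpw[of y] by simp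
  qed
  have "(\<integral>y. (\<Sum>k\<in>S. (B y k)\<^sup>2) \<partial>Dm) \<le> (\<integral>y. 2*b\<^sup>2 * (\<Sum>k\<in>S. (P y k - p k)\<^sup>2) + 2*(1-b)\<^sup>2 * (\<Sum>k\<in>S. (C y k)\<^sup>2) \<partial>Dm)"
    using intB intBound Bpw by (intro Bochner_Integration.integral_mono) auto
  also have "\<dots> = 2*b\<^sup>2 * (\<integral>y. (\<Sum>k\<in>S. (P y k - p k)\<^sup>2) \<partial>Dm) + 2*(1-b)\<^sup>2 * (\<integral>y. (\<Sum>k\<in>S. (C y k)\<^sup>2) \<partial>Dm)"
    using int1 intC by simp
  also have "\<dots> \<le> 2*b\<^sup>2 * \<sigma>\<^sup>2 + 2*(1-b)\<^sup>2 * (L\<^sup>2 * \<delta>\<^sup>2)"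
    using E1 EC by (intro add_mono mult_left_mono) auto
  also have "\<dots> \<le> 2*b\<^sup>2 * \<sigma>\<^sup>2 + 2 * (L\<^sup>2 * \<delta>\<^sup>2)"
  proof -
    have "(1-b)\<^sup>2 \<le> 1" using b by (simp add: power_le_one)
    moreover have "0 \<le> L\<^sup>2 * \<delta>\<^sup>2" by simp
    ultimately have "(1-b)\<^sup>2 * (L\<^sup>2 * \<delta>\<^sup>2) \<le> L\<^sup>2 * \<delta>\<^sup>2"
      by (metis mult_left_le_one_le zero_le_power2)
    then show ?thesis by simp
  qed
  finally have EB: "(\<integral>y. (\<Sum>k\<in>S. (B y k)\<^sup>2) \<partial>Dm) \<le> 2*b\<^sup>2 * \<sigma>\<^sup>2 + 2 * (L\<^sup>2 * \<delta>\<^sup>2)" .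
  define X where "X y = (\<Sum>k\<in>S. ((1-b)*A k + B y k)\<^sup>2)" for y
  have intX: "integrable Dm X" unfolding X_def using G1(1)[OF Dm fin Bi intB] .
  have "(\<integral>y. X y \<partial>Dm) = (\<Sum>k\<in>S. ((1-b)*A k)\<^sup>2) + 2 * (\<Sum>k\<in>S. (1-b)*A k * (\<integral>y. B y k \<partial>Dm)) + (\<integral>y. (\<Sum>k\<in>S. (B y k)\<^sup>2) \<partial>Dm)"
    unfolding X_def by (rule G1(2)[OF Dm fin Bi intB])
  also have "\<dots> = (1-b)\<^sup>2 * (\<Sum>k\<in>S. (A k)\<^sup>2) + (\<integral>y. (\<Sum>k\<in>S. (B y k)\<^sup>2) \<partial>Dm)"
    using B0 by (simp add: power_mult_distrib sum_distrib_left)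
  also have "\<dots> \<le> (1-b) * (\<Sum>k\<in>S. (A k)\<^sup>2) + (2*b\<^sup>2 * \<sigma>\<^sup>2 + 2 * (L\<^sup>2 * \<delta>\<^sup>2))"
  proof -
    have "(1-b)\<^sup>2 \<le> (1-b)" using b by (simp add: power2_eq_square mult_left_le_one_le)
    moreover have "0 \<le> (\<Sum>k\<in>S. (A k)\<^sup>2)" by (intro sum_nonneg) auto
    ultimately show ?thesis using EB by (intro add_mono mult_right_mono) auto
  qed
  finally have EX: "(\<integral>y. X y \<partial>Dm) \<le> (1-b) * (\<Sum>k\<in>S. (A k)\<^sup>2) + (2*b\<^sup>2 * \<sigma>\<^sup>2 + 2 * (L\<^sup>2 * \<delta>\<^sup>2))" .
  have X0: "0 \<le> X y" for y unfolding X_def by (intro sum_nonneg) auto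
  have "(\<integral>\<^sup>+y. ennreal (\<Sum>k\<in>S. (W y k)\<^sup>2) \<partial>Dm) \<le> (\<integral>\<^sup>+y. ennreal (X y) \<partial>Dm)"
  proof (rule nn_integral_mono)
    fix y assume "y \<in> space Dm"
    then have "(\<Sum>k\<in>S. (W y k)\<^sup>2) \<le> X y" using W unfolding X_def B_def by (simp add: add.assoc)
    then show "ennreal (\<Sum>k\<in>S. (W y k)\<^sup>2) \<le> ennreal (X y)" by (rule ennreal_leI)
  qed
  also have "\<dots> = ennreal (\<integral>y. X y \<partial>Dm)" using intX X0 by (subst nn_integral_eq_integral) auto
  also have "\<dots> \<le> ennreal ((1-b) * (\<Sum>k\<in>S. (A k)\<^sup>2) + (2*b\<^sup>2 * \<sigma>\<^sup>2 + 2 * (L\<^sup>2 * \<delta>\<^sup>2)))"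
    using EX by (rule ennreal_leI)
  also have "\<dots> = ennreal (1-b) * ennreal (\<Sum>k\<in>S. (A k)\<^sup>2) + ennreal (2*b\<^sup>2*\<sigma>\<^sup>2) + ennreal (2*L\<^sup>2) * ennreal (\<delta>\<^sup>2)"
  proof -
    have a0: "0 \<le> (\<Sum>k\<in>S. (A k)\<^sup>2)" by (intro sum_nonneg) auto
    show ?thesis using b a0
      by (simp add: ennreal_plus[symmetric] ennreal_mult[symmetric] mult.assoc del: ennreal_plus)
  qed
  finally show ?thesis .
qed

lemma smvr_one:
  "fst (smvr d K Lf fo Jo \<eta> \<beta> w1 xs (Suc 0)) = smvr_U1 fo w1 (xs 1)"
  "snd (smvr d K Lf fo Jo \<eta> \<beta> w1 xs (Suc 0)) = smvr_V1 d Lf Jo (smvr_U1 fo w1 (xs 1)) (xs 1)"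
  by (simp_all add: Let_def)

lemma smvr_step:
  assumes "t \<noteq> 0"
  shows "fst (smvr d K Lf fo Jo \<eta> \<beta> w1 xs (Suc t)) =
     smvr_Un fo (\<beta> (Suc t)) (fst (smvr d K Lf fo Jo \<eta> \<beta> w1 xs t))
       (\<lambda>j. fst (smvr d K Lf fo Jo \<eta> \<beta> w1 xs t) 0 j - \<eta> t * dirvec d K (snd (smvr d K Lf fo Jo \<eta> \<beta> w1 xs t)) j)
       (xs (Suc t))"
   "snd (smvr d K Lf fo Jo \<eta> \<beta> w1 xs (Suc t)) =
     smvr_Vn d Lf Jo (\<beta> (Suc t)) (fst (smvr d K Lf fo Jo \<eta> \<beta> w1 xs t)) (snd (smvr d K Lf fo Jo \<eta> \<beta> w1 xs t))
       (fst (smvr d K Lf fo Jo \<eta> \<beta> w1 xs (Suc t))) (xs (Suc t))"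
  using assms by (simp_all add: Let_def split: prod.split)

lemma U1_loc: "(\<forall>j'\<in>{1..j}. s j' = s' j') \<Longrightarrow> smvr_U1 fo w s j = smvr_U1 fo w s' j"
  by (induction j) auto

lemma Un_loc: "(\<forall>j'\<le>j. Up j' = Up' j') \<Longrightarrow> (\<forall>j'\<in>{1..j}. s j' = s' j') \<Longrightarrow> w = w' \<Longrightarrow>
    smvr_Un fo b Up w s j = smvr_Un fo b Up' w' s' j"
  by (induction j) auto

lemma chain_loc: "(\<forall>j\<in>{1..i}. V j = V' j) \<Longrightarrow> chain d V i = chain d V' i"
  by (induction i) auto

lemma dirvec_loc: "(\<forall>j\<in>{1..K}. V j = V' j) \<Longrightarrow> dirvec d K V = dirvec d K V'"
  unfolding dirvec_def using chain_loc[of K V V' d] by simp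

lemma full_loc:
  assumes agree: "\<forall>s. 1 \<le> s \<longrightarrow> s < T \<longrightarrow> (\<forall>j\<in>{1..K}. xs s j = xs' s j)"
  shows "s < T \<Longrightarrow> (\<forall>j\<le>K. fst (smvr d K Lf fo Jo \<eta> \<beta> ww xs s) j = fst (smvr d K Lf fo Jo \<eta> \<beta> ww xs' s) j)
      \<and> (\<forall>j\<in>{1..K}. snd (smvr d K Lf fo Jo \<eta> \<beta> ww xs s) j = snd (smvr d K Lf fo Jo \<eta> \<beta> ww xs' s) j)"
proof (induction s)
  case 0 then show ?case by simp
next
  case (Suc s)
  show ?case
  proof (cases "s = 0")
    case True
    have r: "\<forall>j\<in>{1..K}. xs 1 j = xs' 1 j" using agree Suc.prems True by auto
    have U: "\<forall>j\<le>K. smvr_U1 fo ww (xs 1) j = smvr_U1 fo ww (xs' 1) j"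
      using r by (auto intro!: U1_loc)
    show ?thesis unfolding True smvr_one
    proof (intro conjI allI impI ballI)
      fix j assume "j \<in> {1..K}"
      then show "smvr_V1 d Lf Jo (smvr_U1 fo ww (xs 1)) (xs 1) j = smvr_V1 d Lf Jo (smvr_U1 fo ww (xs' 1)) (xs' 1) j"
        using U r unfolding smvr_V1_def by auto
    qed (use U in auto)
  next
    case False
    let ?S = "smvr d K Lf fo Jo \<eta> \<beta> ww xs" and ?S' = "smvr d K Lf fo Jo \<eta> \<beta> ww xs'"
    have IH: "\<forall>j\<le>K. fst (?S s) j = fst (?S' s) j" "\<forall>j\<in>{1..K}. snd (?S s) j = snd (?S' s) j"
      using Suc by auto
    have r: "\<forall>j\<in>{1..K}. xs (Suc s) j = xs' (Suc s) j" using agree Suc.prems by simp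
    have dv: "dirvec d K (snd (?S s)) = dirvec d K (snd (?S' s))" using IH(2) by (rule dirvec_loc)
    have U: "\<forall>j\<le>K. fst (?S (Suc s)) j = fst (?S' (Suc s)) j"
      unfolding smvr_step[OF False] dv using IH(1) r
      by (intro allI impI Un_loc) auto
    show ?thesis
    proof (intro conjI)
      show "\<forall>j\<in>{1..K}. snd (?S (Suc s)) j = snd (?S' (Suc s)) j"
      proof
        fix j assume j: "j \<in> {1..K}"
        show "snd (?S (Suc s)) j = snd (?S' (Suc s)) j"
          unfolding smvr_step(2)[OF False] smvr_Vn_def using j IH U r by auto
      qed
    qed (use U in auto)
  qed
qed

lemma part_loc:
  assumes agree: "\<forall>s. 1 \<le> s \<longrightarrow> s < T \<longrightarrow> (\<forall>j\<in>{1..K}. xs s j = xs' s j)"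
    and row: "\<forall>j\<in>{1..m}. xs T j = xs' T j" and m: "m \<le> K" and T: "2 \<le> T"
  shows "(\<forall>j\<le>m. fst (smvr d K Lf fo Jo \<eta> \<beta> ww xs T) j = fst (smvr d K Lf fo Jo \<eta> \<beta> ww xs' T) j)
      \<and> (\<forall>j\<in>{1..m}. snd (smvr d K Lf fo Jo \<eta> \<beta> ww xs T) j = snd (smvr d K Lf fo Jo \<eta> \<beta> ww xs' T) j)"
proof -
  let ?S = "smvr d K Lf fo Jo \<eta> \<beta> ww xs" and ?S' = "smvr d K Lf fo Jo \<eta> \<beta> ww xs'"
  obtain s where Ts: "T = Suc s" and s0: "s \<noteq> 0" using T by (cases T) auto
  have IH: "\<forall>j\<le>K. fst (?S s) j = fst (?S' s) j" "\<forall>j\<in>{1..K}. snd (?S s) j = snd (?S' s) j"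
    using full_loc[OF agree, of s] Ts by auto
  have dv: "dirvec d K (snd (?S s)) = dirvec d K (snd (?S' s))" using IH(2) by (rule dirvec_loc)
  have U: "\<forall>j\<le>m. fst (?S T) j = fst (?S' T) j"
    unfolding Ts smvr_step[OF s0] dv using IH(1) row m Ts
    by (intro allI impI Un_loc) (auto simp del: One_nat_def)
  show ?thesis
  proof (intro conjI)
    show "\<forall>j\<in>{1..m}. snd (?S T) j = snd (?S' T) j"
    proof
      fix j assume j: "j \<in> {1..m}"
      show "snd (?S T) j = snd (?S' T) j"
        unfolding Ts smvr_step(2)[OF s0] smvr_Vn_def using j IH U[unfolded Ts] row[unfolded Ts] m by auto
    qed
  qed (use U in auto)
qed

lemma chain_zero: "1 \<le> i \<Longrightarrow> d 0 \<le> j \<Longrightarrow> chain d V i j k = 0"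
proof (induction i arbitrary: k)
  case 0 then show ?case by simp
next
  case (Suc i)
  show ?case
  proof (cases "i = 0")
    case True
    then show ?thesis using Suc.prems by (auto simp: mmul_def intro!: sum.neutral)
  next
    case False
    then show ?thesis using Suc by (auto simp: mmul_def intro!: sum.neutral)
  qed
qed

lemma dirvec_vecs: "1 \<le> K \<Longrightarrow> dirvec d K V \<in> vecs (d 0)"
  unfolding dirvec_def vecs_def using chain_zero by auto

lemma vecs_lin: "x \<in> vecs n \<Longrightarrow> y \<in> vecs n \<Longrightarrow> (\<lambda>k. a * x k + b * y k) \<in> vecs n"
  by (auto simp: vecs_def)

lemma vecs_inv:
  assumes K: "1 \<le> K" and w1: "w1 \<in> vecs (d 0)"
    and fo_type: "\<forall>i\<in>{1..K}. \<forall>x\<in>vecs (d (i - 1)). \<forall>s. fo i x s \<in> vecs (d i)"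
  shows "1 \<le> t \<Longrightarrow> \<forall>j\<le>K. fst (smvr d K Lf fo Jo \<eta> \<beta> w1 xs t) j \<in> vecs (d j)"
proof (induction t)
  case 0 then show ?case by simp
next
  case (Suc t)
  show ?case
  proof (cases "t = 0")
    case True
    have "smvr_U1 fo w1 (xs 1) j \<in> vecs (d j)" if "j \<le> K" for j
      using that
    proof (induction j)
      case 0 then show ?case using w1 by simp
    next
      case (Suc j)
      then show ?case using fo_type by auto
    qed
    then show ?thesis unfolding True smvr_one by auto
  next
    case False
    let ?S = "smvr d K Lf fo Jo \<eta> \<beta> w1 xs"
    have IH: "\<forall>j\<le>K. fst (?S t) j \<in> vecs (d j)" using Suc False by auto
    have w: "(\<lambda>j. fst (?S t) 0 j - \<eta> t * dirvec d K (snd (?S t)) j) \<in> vecs (d 0)"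
      using vecs_lin[of "fst (?S t) 0" "d 0" "dirvec d K (snd (?S t))" 1 "- \<eta> t"] IH dirvec_vecs[OF K] by simp
    have "smvr_Un fo (\<beta> (Suc t)) (fst (?S t)) (\<lambda>j. fst (?S t) 0 j - \<eta> t * dirvec d K (snd (?S t)) j) (xs (Suc t)) j \<in> vecs (d j)"
      if "j \<le> K" for j
      using that
    proof (induction j)
      case 0 then show ?case using w by simp
    next
      case (Suc j)
      have a: "fst (?S t) (Suc j) \<in> vecs (d (Suc j))" "fst (?S t) j \<in> vecs (d j)" using IH Suc.prems by auto
      have f1: "fo (Suc j) (smvr_Un fo (\<beta> (Suc t)) (fst (?S t)) (\<lambda>j. fst (?S t) 0 j - \<eta> t * dirvec d K (snd (?S t)) j) (xs (Suc t)) j) (xs (Suc t) (Suc j)) \<in> vecs (d (Suc j))"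
        using fo_type Suc by auto
      have f2: "fo (Suc j) (fst (?S t) j) (xs (Suc t) (Suc j)) \<in> vecs (d (Suc j))"
        using fo_type a Suc.prems by auto
      show ?case using a f1 f2 by (auto simp: vecs_def)
    qed
    then show ?thesis unfolding smvr_step[OF False] by auto
  qed
qed


lemma U_step:
  assumes "2 \<le> t" "1 \<le> i"
  shows "fst (smvr d K Lf fo Jo \<eta> \<beta> w1 xs t) i = (\<lambda>k. (1 - \<beta> t) * fst (smvr d K Lf fo Jo \<eta> \<beta> w1 xs (t-1)) i k
     + \<beta> t * fo i (fst (smvr d K Lf fo Jo \<eta> \<beta> w1 xs t) (i-1)) (xs t i) k
     + (1 - \<beta> t) * (fo i (fst (smvr d K Lf fo Jo \<eta> \<beta> w1 xs t) (i-1)) (xs t i) k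
                     - fo i (fst (smvr d K Lf fo Jo \<eta> \<beta> w1 xs (t-1)) (i-1)) (xs t i) k))"
proof -
  obtain t' where t: "t = Suc t'" "t' \<noteq> 0" using assms by (cases t) auto
  obtain i' where i: "i = Suc i'" using assms by (cases i) auto
  show ?thesis unfolding t i using smvr_step(1)[OF t(2), of d K Lf fo Jo \<eta> \<beta> w1 xs] by simp
qed

lemma V_step:
  assumes "2 \<le> t"
  shows "snd (smvr d K Lf fo Jo \<eta> \<beta> w1 xs t) i = proj_ball (d (i - 1)) (d i) Lf
     (\<lambda>a b. (1 - \<beta> t) * snd (smvr d K Lf fo Jo \<eta> \<beta> w1 xs (t-1)) i a b
        + \<beta> t * Jo i (fst (smvr d K Lf fo Jo \<eta> \<beta> w1 xs t) (i-1)) (xs t i) a b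
        + (1 - \<beta> t) * (Jo i (fst (smvr d K Lf fo Jo \<eta> \<beta> w1 xs t) (i-1)) (xs t i) a b
                        - Jo i (fst (smvr d K Lf fo Jo \<eta> \<beta> w1 xs (t-1)) (i-1)) (xs t i) a b))"
proof -
  obtain t' where t: "t = Suc t'" "t' \<noteq> 0" using assms by (cases t) auto
  show ?thesis unfolding t using smvr_step(2)[OF t(2), of d K Lf fo Jo \<eta> \<beta> w1 xs] by (simp add: smvr_Vn_def)
qed

lemma comp_meas:
  fixes F :: "vec \<Rightarrow> 'a \<Rightarrow> real"
  assumes F: "(\<lambda>(x,s). F x s) \<in> borel_measurable (Pi\<^sub>M UNIV (\<lambda>_. borel) \<Otimes>\<^sub>M Dj)"
    and U: "\<And>k. (\<lambda>z. U z k) \<in> borel_measurable N" and Y: "Y \<in> measurable N Dj"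
  shows "(\<lambda>z. F (U z) (Y z)) \<in> borel_measurable N"
proof -
  have "(\<lambda>z. U z) \<in> measurable N (Pi\<^sub>M UNIV (\<lambda>_. borel))"
    using U by (intro measurable_PiM_single') auto
  then have "(\<lambda>z. (U z, Y z)) \<in> measurable N (Pi\<^sub>M UNIV (\<lambda>_. borel) \<Otimes>\<^sub>M Dj)"
    using Y by (intro measurable_Pair) auto
  from measurable_compose[OF this F] show ?thesis by simp
qed

lemma pb_meas:
  assumes "\<And>j k. (\<lambda>z. A z j k) \<in> borel_measurable N"
  shows "(\<lambda>z. pb m n r (A z) j k) \<in> borel_measurable N"
proof (cases "j < m \<and> k < n")
  case True
  note [measurable] = assms
  show ?thesis using True unfolding pb_def fnorm_def by simp measurable
next
  case False then show ?thesis unfolding pb_def if_not_P[OF False] by simp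
qed

lemma chain_meas:
  assumes "\<And>j a b. j \<in> {1..i} \<Longrightarrow> (\<lambda>z. V z j a b) \<in> borel_measurable N"
  shows "(\<lambda>z. chain d (V z) i a b) \<in> borel_measurable N"
  using assms
proof (induction i arbitrary: b)
  case 0 then show ?case by simp
next
  case (Suc i)
  have IH: "(\<lambda>z. chain d (V z) i a l) \<in> borel_measurable N" for l
    using Suc.IH Suc.prems by auto
  have V: "(\<lambda>z. V z (Suc i) l b) \<in> borel_measurable N" for l
    using Suc.prems by auto
  show ?case unfolding chain.simps mmul_def
    using IH V by (intro borel_measurable_sum borel_measurable_times) auto
qed

lemma smvr_meas:
  fixes X :: "'z \<Rightarrow> nat \<Rightarrow> nat \<Rightarrow> 'a"
  assumes Lf: "0 \<le> Lf"
    and fo_meas: "\<forall>i\<in>{1..K}. \<forall>k. (\<lambda>(x, s). fo i x s k) \<in> borel_measurable (Pi\<^sub>M UNIV (\<lambda>_. borel) \<Otimes>\<^sub>M D i)"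
    and Jo_meas: "\<forall>i\<in>{1..K}. \<forall>j k. (\<lambda>(x, s). Jo i x s j k) \<in> borel_measurable (Pi\<^sub>M UNIV (\<lambda>_. borel) \<Otimes>\<^sub>M D i)"
    and X: "\<And>s j. j \<in> {1..K} \<Longrightarrow> (\<lambda>z. X z s j) \<in> measurable N (D j)"
  shows "(\<forall>j\<le>K. \<forall>k. (\<lambda>z. fst (smvr d K Lf fo Jo \<eta> \<beta> w1 (X z) t) j k) \<in> borel_measurable N)
     \<and> (\<forall>j\<in>{1..K}. \<forall>a b. (\<lambda>z. snd (smvr d K Lf fo Jo \<eta> \<beta> w1 (X z) t) j a b) \<in> borel_measurable N)"
proof (induction t)
  case 0 then show ?case by simp
next
  case (Suc t)
  have foc: "(\<lambda>z. fo i (U z) (X z s i) k) \<in> borel_measurable N"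
    if "i \<in> {1..K}" "\<And>k. (\<lambda>z. U z k) \<in> borel_measurable N" for i U s k
    using comp_meas[of "\<lambda>x s. fo i x s k" "D i" U N "\<lambda>z. X z s i"] fo_meas that X by auto
  have Joc: "(\<lambda>z. Jo i (U z) (X z s i) a b) \<in> borel_measurable N"
    if "i \<in> {1..K}" "\<And>k. (\<lambda>z. U z k) \<in> borel_measurable N" for i U s a b
    using comp_meas[of "\<lambda>x s. Jo i x s a b" "D i" U N "\<lambda>z. X z s i"] Jo_meas that X by auto
  show ?case
  proof (cases "t = 0")
    case True
    have U: "\<forall>k. (\<lambda>z. smvr_U1 fo w1 (X z 1) j k) \<in> borel_measurable N" if "j \<le> K" for j
      using that
    proof (induction j)
      case 0 then show ?case by simp
    next
      case (Suc j)
      then show ?case using foc[of "Suc j" "\<lambda>z. smvr_U1 fo w1 (X z 1) j" 1] by auto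
    qed
    have V: "(\<lambda>z. smvr_V1 d Lf Jo (smvr_U1 fo w1 (X z 1)) (X z 1) j a b) \<in> borel_measurable N"
      if "j \<in> {1..K}" for j a b
      unfolding smvr_V1_def proj_ball_eq[OF Lf]
      by (rule pb_meas, rule Joc[of j "\<lambda>z. smvr_U1 fo w1 (X z 1) (j - 1)" 1]) (use that U in auto)
    show ?thesis unfolding True smvr_one using U V by auto
  next
    case False
    let ?S = "\<lambda>z. smvr d K Lf fo Jo \<eta> \<beta> w1 (X z)"
    have IHU: "\<And>j k. j \<le> K \<Longrightarrow> (\<lambda>z. fst (?S z t) j k) \<in> borel_measurable N"
      and IHV: "\<And>j a b. j \<in> {1..K} \<Longrightarrow> (\<lambda>z. snd (?S z t) j a b) \<in> borel_measurable N"
      using Suc.IH by auto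
    define W where "W z = (\<lambda>j. fst (?S z t) 0 j - \<eta> t * dirvec d K (snd (?S z t)) j)" for z
    have Wm: "(\<lambda>z. W z k) \<in> borel_measurable N" for k
      unfolding W_def dirvec_def
      using IHU[of 0 k] chain_meas[of K "\<lambda>z. snd (?S z t)" N d k 0] IHV by auto
    define U where "U z = smvr_Un fo (\<beta> (Suc t)) (fst (?S z t)) (W z) (X z (Suc t))" for z
    have U: "\<forall>k. (\<lambda>z. U z j k) \<in> borel_measurable N" if "j \<le> K" for j
      using that
    proof (induction j)
      case 0 then show ?case using Wm by (simp add: U_def)
    next
      case (Suc j)
      have a: "(\<lambda>z. fo (Suc j) (U z j) (X z (Suc t) (Suc j)) k) \<in> borel_measurable N" for k
        using foc[of "Suc j" "\<lambda>z. U z j" "Suc t"] Suc by auto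
      have b: "(\<lambda>z. fo (Suc j) (fst (?S z t) j) (X z (Suc t) (Suc j)) k) \<in> borel_measurable N" for k
        using foc[of "Suc j" "\<lambda>z. fst (?S z t) j" "Suc t"] Suc IHU by auto
      have c: "(\<lambda>z. fst (?S z t) (Suc j) k) \<in> borel_measurable N" for k using IHU Suc by auto
      show ?case using a b c unfolding U_def smvr_Un.simps
        by (intro allI borel_measurable_add borel_measurable_diff borel_measurable_times borel_measurable_const) simp_all
    qed
    have V: "(\<lambda>z. smvr_Vn d Lf Jo (\<beta> (Suc t)) (fst (?S z t)) (snd (?S z t)) (U z) (X z (Suc t)) j a b) \<in> borel_measurable N"
      if j: "j \<in> {1..K}" for j a b
      unfolding smvr_Vn_def proj_ball_eq[OF Lf]
    proof (rule pb_meas)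
      fix a b
      have a: "(\<lambda>z. Jo j (U z (j - 1)) (X z (Suc t) j) a b) \<in> borel_measurable N"
        using Joc[of j "\<lambda>z. U z (j - 1)" "Suc t"] U j by auto
      have b: "(\<lambda>z. Jo j (fst (?S z t) (j - 1)) (X z (Suc t) j) a b) \<in> borel_measurable N"
        using Joc[of j "\<lambda>z. fst (?S z t) (j - 1)" "Suc t"] IHU j by auto
      have c: "(\<lambda>z. snd (?S z t) j a b) \<in> borel_measurable N" using IHV j by auto
      show "(\<lambda>z. (1 - \<beta> (Suc t)) * snd (?S z t) j a b + \<beta> (Suc t) * Jo j (U z (j - 1)) (X z (Suc t) j) a b +
             (1 - \<beta> (Suc t)) * (Jo j (U z (j - 1)) (X z (Suc t) j) a b - Jo j (fst (?S z t) (j - 1)) (X z (Suc t) j) a b))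
            \<in> borel_measurable N"
        using a b c by (intro borel_measurable_add borel_measurable_diff borel_measurable_times borel_measurable_const) simp_all
    qed
    have e1: "fst (?S z (Suc t)) = U z" for z unfolding U_def W_def smvr_step[OF False] ..
    show ?thesis using U V unfolding smvr_step(2)[OF False] e1 by auto
  qed
qed

lemma fnorm_sq': "(fnorm m n A)\<^sup>2 = (\<Sum>k\<in>{..<m}\<times>{..<n}. (A (fst k) (snd k))\<^sup>2)"
  unfolding fnorm_sq by (simp add: case_prod_beta)

lemma fn_meas:
  assumes "\<And>a b. (\<lambda>z. F z a b) \<in> borel_measurable N"
  shows "(\<lambda>z. ennreal ((fnorm m n (F z))\<^sup>2)) \<in> borel_measurable N"
  using assms unfolding fnorm_def by measurable

lemma vn_meas:
  assumes "\<And>k. (\<lambda>z. F z k) \<in> borel_measurable N"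
  shows "(\<lambda>z. ennreal ((vnorm n (F z))\<^sup>2)) \<in> borel_measurable N"
  using assms unfolding vnorm_def by measurable

lemma int_comp_meas:
  fixes F :: "vec \<Rightarrow> 'a \<Rightarrow> real"
  assumes Dj: "prob_space Dj"
    and F: "(\<lambda>(x,s). F x s) \<in> borel_measurable (Pi\<^sub>M UNIV (\<lambda>_. borel) \<Otimes>\<^sub>M Dj)"
    and U: "\<And>k. (\<lambda>z. U z k) \<in> borel_measurable N"
  shows "(\<lambda>z. \<integral>s. F (U z) s \<partial>Dj) \<in> borel_measurable N"
proof -
  interpret prob_space Dj by (rule Dj)
  have "(\<lambda>x. \<integral>s. F x s \<partial>Dj) \<in> borel_measurable (Pi\<^sub>M UNIV (\<lambda>_. borel))"
    by (rule borel_measurable_lebesgue_integral) (use F in \<open>simp add: case_prod_beta'\<close>)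
  moreover have "(\<lambda>z. U z) \<in> measurable N (Pi\<^sub>M UNIV (\<lambda>_. borel))"
    using U by (intro measurable_PiM_single') auto
  ultimately show ?thesis using measurable_compose by blast
qed

theorem mainTheorem5:
  fixes M :: "'w measure" and D :: "nat \<Rightarrow> 'a measure"
    and \<xi> :: "nat \<Rightarrow> nat \<Rightarrow> 'w \<Rightarrow> 'a"
    and K :: nat and d :: "nat \<Rightarrow> nat"
    and f :: "nat \<Rightarrow> vec \<Rightarrow> vec" and Jf :: "nat \<Rightarrow> vec \<Rightarrow> mat"
    and fo :: "nat \<Rightarrow> vec \<Rightarrow> 'a \<Rightarrow> vec" and Jo :: "nat \<Rightarrow> vec \<Rightarrow> 'a \<Rightarrow> mat"
    and Lf LJ \<sigma>f \<sigma>J Lcf LcJ :: real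
    and \<eta> \<beta> :: "nat \<Rightarrow> real" and w1 :: vec
    and u :: "nat \<Rightarrow> nat \<Rightarrow> 'w \<Rightarrow> vec" and v :: "nat \<Rightarrow> nat \<Rightarrow> 'w \<Rightarrow> mat"
  defines "u \<equiv> (\<lambda>t i \<omega>. fst (smvr d K Lf fo Jo \<eta> \<beta> w1 (\<lambda>t' i'. \<xi> t' i' \<omega>) t) i)"
    and "v \<equiv> (\<lambda>t i \<omega>. snd (smvr d K Lf fo Jo \<eta> \<beta> w1 (\<lambda>t' i'. \<xi> t' i' \<omega>) t) i)"
  assumes K: "1 \<le> K"
    and dims: "\<forall>i\<le>K. 0 < d i" "d K = 1"
    (* typing: f_i : R^{d_{i-1}} \<rightarrow> R^{d_i}, nabla f_i(x), nabla f_i(x;s) \<in> R^{d_{i-1} x d_i} *)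
    and f_type: "\<forall>i\<in>{1..K}. \<forall>x\<in>vecs (d (i - 1)). f i x \<in> vecs (d i) \<and> Jf i x \<in> mats (d (i - 1)) (d i)"
    and fo_type: "\<forall>i\<in>{1..K}. \<forall>x\<in>vecs (d (i - 1)). \<forall>s.
         fo i x s \<in> vecs (d i) \<and> Jo i x s \<in> mats (d (i - 1)) (d i)"
    and w1: "w1 \<in> vecs (d 0)"
    (* (A1) *)
    and jac: "\<forall>i\<in>{1..K}. is_tjacobian (d (i - 1)) (d i) (f i) (Jf i)"
    and A1_lip: "\<forall>i\<in>{1..K}. \<forall>x\<in>vecs (d (i - 1)). \<forall>y\<in>vecs (d (i - 1)).
         vnorm (d i) (\<lambda>k. f i x k - f i y k) \<le> Lf * vnorm (d (i - 1)) (\<lambda>k. x k - y k)"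
    and A1_bnd: "\<forall>i\<in>{1..K}. \<forall>x\<in>vecs (d (i - 1)). fnorm (d (i - 1)) (d i) (Jf i x) \<le> Lf"
    and A1_jlip: "\<forall>i\<in>{1..K}. \<forall>x\<in>vecs (d (i - 1)). \<forall>y\<in>vecs (d (i - 1)).
         fnorm (d (i - 1)) (d i) (\<lambda>j k. Jf i x j k - Jf i y j k) \<le> LJ * vnorm (d (i - 1)) (\<lambda>k. x k - y k)"
    (* probability setting *)
    and M: "prob_space M"
    and D: "\<forall>i\<in>{1..K}. prob_space (D i)"
    and fo_meas: "\<forall>i\<in>{1..K}. \<forall>k. (\<lambda>(x, s). fo i x s k) \<in> borel_measurable (Pi\<^sub>M UNIV (\<lambda>_. borel) \<Otimes>\<^sub>M D i)"
    and Jo_meas: "\<forall>i\<in>{1..K}. \<forall>j k. (\<lambda>(x, s). Jo i x s j k) \<in> borel_measurable (Pi\<^sub>M UNIV (\<lambda>_. borel) \<Otimes>\<^sub>M D i)"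
    and xi_meas: "\<forall>t\<ge>1. \<forall>i\<in>{1..K}. \<xi> t i \<in> measurable M (D i) \<and> distr M (D i) (\<xi> t i) = D i"
    and xi_indep: "prob_space.indep_vars M (\<lambda>(t, i). D i) (\<lambda>(t, i). \<xi> t i) ({1..} \<times> {1..K})"
    (* (A2) *)
    and A2_f_mean: "\<forall>i\<in>{1..K}. \<forall>x\<in>vecs (d (i - 1)). \<forall>k.
         integrable (D i) (\<lambda>s. fo i x s k) \<and> (\<integral>s. fo i x s k \<partial>D i) = f i x k"
    and A2_J_mean: "\<forall>i\<in>{1..K}. \<forall>x\<in>vecs (d (i - 1)). \<forall>j k.
         integrable (D i) (\<lambda>s. Jo i x s j k) \<and> (\<integral>s. Jo i x s j k \<partial>D i) = Jf i x j k"
    and A2_f_var: "\<forall>i\<in>{1..K}. \<forall>x\<in>vecs (d (i - 1)).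
         (\<integral>\<^sup>+s. ennreal ((vnorm (d i) (\<lambda>k. fo i x s k - f i x k))\<^sup>2) \<partial>D i) \<le> ennreal (\<sigma>f\<^sup>2)"
    and A2_J_var: "\<forall>i\<in>{1..K}. \<forall>x\<in>vecs (d (i - 1)).
         (\<integral>\<^sup>+s. ennreal ((fnorm (d (i - 1)) (d i) (\<lambda>j k. Jo i x s j k - Jf i x j k))\<^sup>2) \<partial>D i)
           \<le> ennreal (\<sigma>J\<^sup>2)"
    (* (A3) *)
    and A3_f: "\<forall>i\<in>{1..K}. \<forall>x\<in>vecs (d (i - 1)). \<forall>y\<in>vecs (d (i - 1)).
         (\<integral>\<^sup>+s. ennreal ((vnorm (d i) (\<lambda>k. fo i x s k - fo i y s k))\<^sup>2) \<partial>D i)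
           \<le> ennreal (Lcf\<^sup>2 * (vnorm (d (i - 1)) (\<lambda>k. x k - y k))\<^sup>2)"
    and A3_J: "\<forall>i\<in>{1..K}. \<forall>x\<in>vecs (d (i - 1)). \<forall>y\<in>vecs (d (i - 1)).
         (\<integral>\<^sup>+s. ennreal ((fnorm (d (i - 1)) (d i) (\<lambda>j k. Jo i x s j k - Jo i y s j k))\<^sup>2) \<partial>D i)
           \<le> ennreal (LcJ\<^sup>2 * (vnorm (d (i - 1)) (\<lambda>k. x k - y k))\<^sup>2)"
    (* step sizes *)
    and eta: "\<forall>t. 0 < \<eta> t"
    and beta: "\<forall>t. 0 \<le> \<beta> t \<and> \<beta> t \<le> 1"
  shows "\<forall>t\<ge>2. \<forall>i\<in>{1..K}.
     (\<integral>\<^sup>+\<omega>. ennreal ((fnorm (d (i - 1)) (d i) (\<lambda>j k. v t i \<omega> j k - Jf i (u t (i - 1) \<omega>) j k))\<^sup>2) \<partial>M)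
       \<le> ennreal (1 - \<beta> t) *
           (\<integral>\<^sup>+\<omega>. ennreal ((fnorm (d (i - 1)) (d i)
               (\<lambda>j k. v (t - 1) i \<omega> j k - Jf i (u (t - 1) (i - 1) \<omega>) j k))\<^sup>2) \<partial>M)
         + ennreal (2 * (\<beta> t)\<^sup>2 * \<sigma>J\<^sup>2)
         + ennreal (2 * LcJ\<^sup>2) *
           (\<integral>\<^sup>+\<omega>. ennreal ((vnorm (d (i - 1)) (\<lambda>k. u t (i - 1) \<omega> k - u (t - 1) (i - 1) \<omega> k))\<^sup>2) \<partial>M)
     \<and>
     (\<integral>\<^sup>+\<omega>. ennreal ((vnorm (d i) (\<lambda>k. u t i \<omega> k - f i (u t (i - 1) \<omega>) k))\<^sup>2) \<partial>M)
       \<le> ennreal (1 - \<beta> t) *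
           (\<integral>\<^sup>+\<omega>. ennreal ((vnorm (d i) (\<lambda>k. u (t - 1) i \<omega> k - f i (u (t - 1) (i - 1) \<omega>) k))\<^sup>2) \<partial>M)
         + ennreal (2 * (\<beta> t)\<^sup>2 * \<sigma>f\<^sup>2)
         + ennreal (2 * Lcf\<^sup>2) *
           (\<integral>\<^sup>+\<omega>. ennreal ((vnorm (d (i - 1)) (\<lambda>k. u t (i - 1) \<omega> k - u (t - 1) (i - 1) \<omega> k))\<^sup>2) \<partial>M)"
proof (intro allI impI ballI)
  fix t i :: nat assume t: "2 \<le> t" and i: "i \<in> {1..K}"
  interpret M: prob_space M by (rule M)
  let ?S = "smvr d K Lf fo Jo \<eta> \<beta> w1"
  have Lf0: "0 \<le> Lf"
  proof -
    have "(\<lambda>_. 0) \<in> vecs (d (1 - 1))" by (simp add: vecs_def)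
    moreover have "(1::nat) \<in> {1..K}" using K by simp
    ultimately have "fnorm (d (1 - 1)) (d 1) (Jf 1 (\<lambda>_. 0)) \<le> Lf" using A1_bnd by blast
    moreover have "0 \<le> fnorm (d (1 - 1)) (d 1) (Jf 1 (\<lambda>_. 0))" by (simp add: fnorm_def sum_nonneg)
    ultimately show ?thesis by linarith
  qed
  have i1: "1 \<le> i" "i \<le> K" using i by auto
  have t1: "1 \<le> t" "1 \<le> t - 1" using t by auto
  have b01: "0 \<le> \<beta> t" "\<beta> t \<le> 1" using beta by auto
  define DD where "DD j = (if j \<in> {1..K} then D j else return (count_space UNIV) undefined)" for j
  define MM where "MM p = DD (snd p)" for p :: "nat \<times> nat"
  have DDp: "prob_space (DD j)" for j
    unfolding DD_def using D by (auto intro: prob_space_return)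
  have MMp: "prob_space (MM p)" for p unfolding MM_def by (rule DDp)
  have DDi: "DD j = D j" if "j \<in> {1..K}" for j using that by (simp add: DD_def)
  have Dip: "prob_space (D i)" using D i by auto
  define I' where "I' = ({1..<t} \<times> {1..K}) \<union> ({t} \<times> {1..<i})"
  define p0 where "p0 = (t, i)"
  define J where "J = insert p0 I'"
  have finI: "finite I'" unfolding I'_def by auto
  have p0I: "p0 \<notin> I'" unfolding p0_def I'_def by auto
  have JK: "J \<subseteq> {1..} \<times> {1..K}" unfolding J_def I'_def p0_def using t i by auto
  have MMp0: "MM p0 = D i" unfolding MM_def p0_def using i by (simp add: DD_def)
  define c where "c j = (SOME y. y \<in> space (DD j))" for j
  have c: "c j \<in> space (DD j)" for j
    unfolding c_def using prob_space.not_empty[OF DDp[of j]] by (auto intro: someI_ex)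
  define Xz where "Xz z = (\<lambda>s j. if (s, j) \<in> J then z (s, j) else c j)" for z :: "nat \<times> nat \<Rightarrow> 'a"
  define Xx where "Xx x = (\<lambda>s j. if (s, j) \<in> I' then x (s, j) else c j)" for x :: "nat \<times> nat \<Rightarrow> 'a"
  define Xi where "Xi \<omega> = (\<lambda>p\<in>J. \<xi> (fst p) (snd p) \<omega>)" for \<omega>
  define Uc where "Uc xs = fst (?S xs t) (i - 1)" for xs
  define Up where "Up xs = fst (?S xs (t - 1)) (i - 1)" for xs
  define Upi where "Upi xs = fst (?S xs (t - 1)) i" for xs
  define Vp where "Vp xs = snd (?S xs (t - 1)) i" for xs
  define Ut where "Ut xs = fst (?S xs t) i" for xs
  define Vt where "Vt xs = snd (?S xs t) i" for xs

  have loc_prev: "Up xs = Up xs' \<and> Upi xs = Upi xs' \<and> Vp xs = Vp xs'"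
    if "\<forall>s. 1 \<le> s \<longrightarrow> s < t \<longrightarrow> (\<forall>j\<in>{1..K}. xs s j = xs' s j)" for xs xs'
  proof -
    have "t - 1 < t" using t by simp
    from full_loc[OF that this, where d=d and Lf=Lf and fo=fo and Jo=Jo and \<eta>=\<eta> and \<beta>=\<beta> and ww=w1]
    show ?thesis unfolding Up_def Upi_def Vp_def using i by auto
  qed
  have loc_cur: "Uc xs = Uc xs'"
    if "\<forall>s. 1 \<le> s \<longrightarrow> s < t \<longrightarrow> (\<forall>j\<in>{1..K}. xs s j = xs' s j)" "\<forall>j\<in>{1..i-1}. xs t j = xs' t j" for xs xs'
  proof -
    have "i - 1 \<le> K" using i by auto
    from part_loc[OF that(1) that(2) this t, where d=d and Lf=Lf and fo=fo and Jo=Jo and \<eta>=\<eta> and \<beta>=\<beta> and ww=w1]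
    show ?thesis unfolding Uc_def by auto
  qed
  have loc_full: "Uc xs = Uc xs' \<and> Ut xs = Ut xs' \<and> Vt xs = Vt xs'"
    if "\<forall>s. 1 \<le> s \<longrightarrow> s < t \<longrightarrow> (\<forall>j\<in>{1..K}. xs s j = xs' s j)" "\<forall>j\<in>{1..i}. xs t j = xs' t j" for xs xs'
  proof -
    from part_loc[OF that(1) that(2) i1(2) t, where d=d and Lf=Lf and fo=fo and Jo=Jo and \<eta>=\<eta> and \<beta>=\<beta> and ww=w1]
    show ?thesis unfolding Uc_def Ut_def Vt_def using i by auto
  qed

  have cv: "Uc (Xz (Xi \<omega>)) = u t (i - 1) \<omega> \<and> Ut (Xz (Xi \<omega>)) = u t i \<omega> \<and> Vt (Xz (Xi \<omega>)) = v t i \<omega>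
      \<and> Up (Xz (Xi \<omega>)) = u (t - 1) (i - 1) \<omega> \<and> Upi (Xz (Xi \<omega>)) = u (t - 1) i \<omega> \<and> Vp (Xz (Xi \<omega>)) = v (t - 1) i \<omega>" for \<omega>
  proof -
    have a1: "\<forall>s. 1 \<le> s \<longrightarrow> s < t \<longrightarrow> (\<forall>j\<in>{1..K}. Xz (Xi \<omega>) s j = \<xi> s j \<omega>)"
      by (auto simp: Xz_def Xi_def J_def I'_def)
    have a2: "\<forall>j\<in>{1..i}. Xz (Xi \<omega>) t j = \<xi> t j \<omega>"
      by (auto simp: Xz_def Xi_def J_def I'_def p0_def)
    show ?thesis using loc_full[OF a1 a2] loc_prev[OF a1]
      by (simp add: u_def v_def Uc_def Ut_def Vt_def Up_def Upi_def Vp_def)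
  qed
  have ag: "Uc (Xz (x(p0 := y))) = Uc (Xx x) \<and> Up (Xz (x(p0 := y))) = Up (Xx x)
     \<and> Upi (Xz (x(p0 := y))) = Upi (Xx x) \<and> Vp (Xz (x(p0 := y))) = Vp (Xx x)" for x y
  proof -
    have a1: "\<forall>s. 1 \<le> s \<longrightarrow> s < t \<longrightarrow> (\<forall>j\<in>{1..K}. Xz (x(p0 := y)) s j = Xx x s j)"
      by (auto simp: Xz_def Xx_def J_def I'_def p0_def)
    have a2: "\<forall>j\<in>{1..i-1}. Xz (x(p0 := y)) t j = Xx x t j"
      by (auto simp: Xz_def Xx_def J_def I'_def p0_def)
    show ?thesis using loc_cur[OF a1 a2] loc_prev[OF a1] by blast
  qed
  have Xzp0: "Xz (x(p0 := y)) t i = y" for x y by (simp add: Xz_def J_def p0_def)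

  have rv: "\<xi> (fst p) (snd p) \<in> measurable M (MM p)" if "p \<in> J" for p
    using xi_meas JK that by (auto simp: MM_def DDi)
  have ind: "M.indep_vars MM (\<lambda>p. \<xi> (fst p) (snd p)) J"
  proof -
    have "M.indep_vars (\<lambda>(t, i). D i) (\<lambda>(t, i). \<xi> t i) J"
      by (rule M.indep_vars_subset[OF xi_indep JK])
    moreover have "M.indep_vars (\<lambda>(t, i). D i) (\<lambda>(t, i). \<xi> t i) J \<longleftrightarrow> M.indep_vars MM (\<lambda>p. \<xi> (fst p) (snd p)) J"
      by (rule M.indep_vars_cong) (use JK in \<open>auto simp: MM_def DDi case_prod_beta\<close>)
    ultimately show ?thesis by simp
  qed
  have F1: "distr M (Pi\<^sub>M J MM) Xi = Pi\<^sub>M J MM"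
  proof -
    have Jne: "J \<noteq> {}" unfolding J_def by simp
    have "distr M (Pi\<^sub>M J MM) (\<lambda>x. \<lambda>p\<in>J. \<xi> (fst p) (snd p) x) = (\<Pi>\<^sub>M p\<in>J. distr M (MM p) (\<xi> (fst p) (snd p)))"
      using M.indep_vars_iff_distr_eq_PiM'[OF Jne rv] ind by simp
    also have "\<dots> = Pi\<^sub>M J MM"
    proof (rule PiM_cong[OF refl])
      fix p assume "p \<in> J"
      then show "distr M (MM p) (\<xi> (fst p) (snd p)) = MM p"
        using xi_meas JK by (auto simp: MM_def DDi)
    qed
    finally show ?thesis unfolding Xi_def .
  qed
  have F2: "Xi \<in> measurable M (Pi\<^sub>M J MM)"
    unfolding Xi_def by (rule measurable_restrict) (rule rv)
  interpret PSF: product_sigma_finite MM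
    unfolding product_sigma_finite_def using prob_space_imp_sigma_finite[OF MMp] by blast
  have PIp: "prob_space (Pi\<^sub>M I' MM)" by (rule prob_space_PiM) (rule MMp)
  have trans: "(\<integral>\<^sup>+\<omega>. h (Xi \<omega>) \<partial>M) = (\<integral>\<^sup>+x. (\<integral>\<^sup>+y. h (x(p0 := y)) \<partial>MM p0) \<partial>Pi\<^sub>M I' MM)"
    if h: "h \<in> borel_measurable (Pi\<^sub>M J MM)" for h
  proof -
    have "(\<integral>\<^sup>+\<omega>. h (Xi \<omega>) \<partial>M) = (\<integral>\<^sup>+z. h z \<partial>distr M (Pi\<^sub>M J MM) Xi)"
      using h F2 by (subst nn_integral_distr) auto
    also have "\<dots> = (\<integral>\<^sup>+z. h z \<partial>Pi\<^sub>M J MM)" by (simp add: F1)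
    also have "\<dots> = (\<integral>\<^sup>+x. (\<integral>\<^sup>+y. h (x(p0 := y)) \<partial>MM p0) \<partial>Pi\<^sub>M I' MM)"
      unfolding J_def by (rule PSF.product_nn_integral_insert[OF finI p0I]) (use h in \<open>simp add: J_def\<close>)
    finally show ?thesis .
  qed

  have Xz_meas: "(\<lambda>z. Xz z s j) \<in> measurable (Pi\<^sub>M J MM) (D j)" if "j \<in> {1..K}" for s j
  proof (cases "(s, j) \<in> J")
    case True
    then have "(\<lambda>z. z (s,j)) \<in> measurable (Pi\<^sub>M J MM) (MM (s,j))" by (rule measurable_component_singleton)
    then show ?thesis using True that by (simp add: Xz_def MM_def DDi)
  next
    case False
    have "c j \<in> space (D j)" using c[of j] that by (simp add: DDi)
    then show ?thesis using False by (simp add: Xz_def)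
  qed
  have Xx_meas: "(\<lambda>x. Xx x s j) \<in> measurable (Pi\<^sub>M I' MM) (D j)" if "j \<in> {1..K}" for s j
  proof (cases "(s, j) \<in> I'")
    case True
    then have "(\<lambda>z. z (s,j)) \<in> measurable (Pi\<^sub>M I' MM) (MM (s,j))" by (rule measurable_component_singleton)
    then show ?thesis using True that by (simp add: Xx_def MM_def DDi)
  next
    case False
    have "c j \<in> space (D j)" using c[of j] that by (simp add: DDi)
    then show ?thesis using False by (simp add: Xx_def)
  qed
  have SM: "(\<forall>j\<le>K. \<forall>k. (\<lambda>z. fst (?S (X z) r) j k) \<in> borel_measurable N) \<and> (\<forall>j\<in>{1..K}. \<forall>a b. (\<lambda>z. snd (?S (X z) r) j a b) \<in> borel_measurable N)"
    if "\<And>s j. j \<in> {1..K} \<Longrightarrow> (\<lambda>z. X z s j) \<in> measurable N (D j)" for N :: "(nat \<times> nat \<Rightarrow> 'a) measure" and X r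
    by (rule smvr_meas[OF Lf0 fo_meas Jo_meas that])
  have fo_t: "\<forall>i\<in>{1..K}. \<forall>x\<in>vecs (d (i - 1)). \<forall>s. fo i x s \<in> vecs (d i)" using fo_type by blast
  have VI: "fst (?S xs s) j \<in> vecs (d j)" if "1 \<le> s" "j \<le> K" for xs s j
    using vecs_inv[OF K w1 fo_t that(1)] that(2) by auto
  have vUc: "Uc xs \<in> vecs (d (i - 1))" for xs unfolding Uc_def using VI t1 i by auto
  have vUp: "Up xs \<in> vecs (d (i - 1))" for xs unfolding Up_def using VI t1 i by auto
  have Jf_comp: "(\<lambda>z. Jf i (U z) a b) \<in> borel_measurable N"
    if "\<And>k. (\<lambda>z. U z k) \<in> borel_measurable N" "\<And>z. U z \<in> vecs (d (i - 1))"
    for N :: "(nat \<times> nat \<Rightarrow> 'a) measure" and U a b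
  proof -
    have "(\<lambda>z. \<integral>s. Jo i (U z) s a b \<partial>D i) \<in> borel_measurable N"
      using int_comp_meas[of "D i" "\<lambda>x s. Jo i x s a b" U N] Dip Jo_meas i that(1) by auto
    moreover have "(\<integral>s. Jo i (U z) s a b \<partial>D i) = Jf i (U z) a b" for z using A2_J_mean i that(2) by auto
    ultimately show ?thesis by simp
  qed
  have f_comp: "(\<lambda>z. f i (U z) k) \<in> borel_measurable N"
    if "\<And>k. (\<lambda>z. U z k) \<in> borel_measurable N" "\<And>z. U z \<in> vecs (d (i - 1))"
    for N :: "(nat \<times> nat \<Rightarrow> 'a) measure" and U k
  proof -
    have "(\<lambda>z. \<integral>s. fo i (U z) s k \<partial>D i) \<in> borel_measurable N"
      using int_comp_meas[of "D i" "\<lambda>x s. fo i x s k" U N] Dip fo_meas i that(1) by auto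
    moreover have "(\<integral>s. fo i (U z) s k \<partial>D i) = f i (U z) k" for z using A2_f_mean i that(2) by auto
    ultimately show ?thesis by simp
  qed
  have QM: "(\<lambda>z. Uc (X z) k) \<in> borel_measurable N \<and> (\<lambda>z. Up (X z) k) \<in> borel_measurable N
      \<and> (\<lambda>z. Upi (X z) k) \<in> borel_measurable N \<and> (\<lambda>z. Ut (X z) k) \<in> borel_measurable N
      \<and> (\<lambda>z. Vp (X z) a b) \<in> borel_measurable N \<and> (\<lambda>z. Vt (X z) a b) \<in> borel_measurable N
      \<and> (\<lambda>z. Jf i (Uc (X z)) a b) \<in> borel_measurable N \<and> (\<lambda>z. Jf i (Up (X z)) a b) \<in> borel_measurable N
      \<and> (\<lambda>z. f i (Uc (X z)) k) \<in> borel_measurable N \<and> (\<lambda>z. f i (Up (X z)) k) \<in> borel_measurable N"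
    if X: "\<And>s j. j \<in> {1..K} \<Longrightarrow> (\<lambda>z. X z s j) \<in> measurable N (D j)" for N :: "(nat \<times> nat \<Rightarrow> 'a) measure" and X k a b
  proof -
    have St: "(\<forall>j\<le>K. \<forall>k. (\<lambda>z. fst (?S (X z) t) j k) \<in> borel_measurable N) \<and> (\<forall>j\<in>{1..K}. \<forall>a b. (\<lambda>z. snd (?S (X z) t) j a b) \<in> borel_measurable N)"
      by (rule SM) (rule X)
    have St1: "(\<forall>j\<le>K. \<forall>k. (\<lambda>z. fst (?S (X z) (t - 1)) j k) \<in> borel_measurable N) \<and> (\<forall>j\<in>{1..K}. \<forall>a b. (\<lambda>z. snd (?S (X z) (t - 1)) j a b) \<in> borel_measurable N)"
      by (rule SM) (rule X)
    have A: "\<And>k. (\<lambda>z. Uc (X z) k) \<in> borel_measurable N" "\<And>k. (\<lambda>z. Up (X z) k) \<in> borel_measurable N"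
      unfolding Uc_def Up_def using St St1 i by auto
    show ?thesis
      using A St St1 i Jf_comp[OF A(1) vUc] Jf_comp[OF A(2) vUp]
        f_comp[OF A(1) vUc] f_comp[OF A(2) vUp]
      unfolding Upi_def Ut_def Vp_def Vt_def by auto
  qed
  have QMz: "(\<lambda>z. Uc (Xz z) k) \<in> borel_measurable (Pi\<^sub>M J MM) \<and> (\<lambda>z. Up (Xz z) k) \<in> borel_measurable (Pi\<^sub>M J MM)
      \<and> (\<lambda>z. Upi (Xz z) k) \<in> borel_measurable (Pi\<^sub>M J MM) \<and> (\<lambda>z. Ut (Xz z) k) \<in> borel_measurable (Pi\<^sub>M J MM)
      \<and> (\<lambda>z. Vp (Xz z) a b) \<in> borel_measurable (Pi\<^sub>M J MM) \<and> (\<lambda>z. Vt (Xz z) a b) \<in> borel_measurable (Pi\<^sub>M J MM)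
      \<and> (\<lambda>z. Jf i (Uc (Xz z)) a b) \<in> borel_measurable (Pi\<^sub>M J MM) \<and> (\<lambda>z. Jf i (Up (Xz z)) a b) \<in> borel_measurable (Pi\<^sub>M J MM)
      \<and> (\<lambda>z. f i (Uc (Xz z)) k) \<in> borel_measurable (Pi\<^sub>M J MM) \<and> (\<lambda>z. f i (Up (Xz z)) k) \<in> borel_measurable (Pi\<^sub>M J MM)" for k a b
    by (rule QM) (rule Xz_meas)
  have QMx: "(\<lambda>z. Uc (Xx z) k) \<in> borel_measurable (Pi\<^sub>M I' MM) \<and> (\<lambda>z. Up (Xx z) k) \<in> borel_measurable (Pi\<^sub>M I' MM)
      \<and> (\<lambda>z. Upi (Xx z) k) \<in> borel_measurable (Pi\<^sub>M I' MM) \<and> (\<lambda>z. Ut (Xx z) k) \<in> borel_measurable (Pi\<^sub>M I' MM)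
      \<and> (\<lambda>z. Vp (Xx z) a b) \<in> borel_measurable (Pi\<^sub>M I' MM) \<and> (\<lambda>z. Vt (Xx z) a b) \<in> borel_measurable (Pi\<^sub>M I' MM)
      \<and> (\<lambda>z. Jf i (Uc (Xx z)) a b) \<in> borel_measurable (Pi\<^sub>M I' MM) \<and> (\<lambda>z. Jf i (Up (Xx z)) a b) \<in> borel_measurable (Pi\<^sub>M I' MM)
      \<and> (\<lambda>z. f i (Uc (Xx z)) k) \<in> borel_measurable (Pi\<^sub>M I' MM) \<and> (\<lambda>z. f i (Up (Xx z)) k) \<in> borel_measurable (Pi\<^sub>M I' MM)" for k a b
    by (rule QM) (rule Xx_meas)

  have final: "(\<integral>\<^sup>+\<omega>. h (Xi \<omega>) \<partial>M) \<le> ennreal (1 - \<beta> t) * (\<integral>\<^sup>+\<omega>. g1 (Xi \<omega>) \<partial>M) + ennreal C + ennreal L2 * (\<integral>\<^sup>+\<omega>. g2 (Xi \<omega>) \<partial>M)"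
    if hm: "h \<in> borel_measurable (Pi\<^sub>M J MM)" and g1m: "g1 \<in> borel_measurable (Pi\<^sub>M J MM)"
      and g2m: "g2 \<in> borel_measurable (Pi\<^sub>M J MM)"
      and G1m: "G1 \<in> borel_measurable (Pi\<^sub>M I' MM)" and G2m: "G2 \<in> borel_measurable (Pi\<^sub>M I' MM)"
      and g1G: "\<And>x y. g1 (x(p0:=y)) = G1 x" and g2G: "\<And>x y. g2 (x(p0:=y)) = G2 x"
      and pw: "\<And>x. (\<integral>\<^sup>+y. h (x(p0 := y)) \<partial>MM p0) \<le> ennreal (1 - \<beta> t) * G1 x + ennreal C + ennreal L2 * G2 x"
    for h g1 g2 G1 G2 C L2
  proof -
    have e1: "(\<integral>\<^sup>+x. G1 x \<partial>Pi\<^sub>M I' MM) = (\<integral>\<^sup>+\<omega>. g1 (Xi \<omega>) \<partial>M)"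
      using trans[OF g1m] g1G by (simp add: prob_space.emeasure_space_1[OF MMp])
    have e2: "(\<integral>\<^sup>+x. G2 x \<partial>Pi\<^sub>M I' MM) = (\<integral>\<^sup>+\<omega>. g2 (Xi \<omega>) \<partial>M)"
      using trans[OF g2m] g2G by (simp add: prob_space.emeasure_space_1[OF MMp])
    have "(\<integral>\<^sup>+\<omega>. h (Xi \<omega>) \<partial>M) = (\<integral>\<^sup>+x. (\<integral>\<^sup>+y. h (x(p0 := y)) \<partial>MM p0) \<partial>Pi\<^sub>M I' MM)"
      by (rule trans[OF hm])
    also have "\<dots> \<le> (\<integral>\<^sup>+x. ennreal (1 - \<beta> t) * G1 x + ennreal C + ennreal L2 * G2 x \<partial>Pi\<^sub>M I' MM)"
      by (intro nn_integral_mono pw)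
    also have "\<dots> = (\<integral>\<^sup>+x. ennreal (1 - \<beta> t) * G1 x + ennreal C \<partial>Pi\<^sub>M I' MM) + (\<integral>\<^sup>+x. ennreal L2 * G2 x \<partial>Pi\<^sub>M I' MM)"
      using G1m G2m by (intro nn_integral_add) auto
    also have "(\<integral>\<^sup>+x. ennreal (1 - \<beta> t) * G1 x + ennreal C \<partial>Pi\<^sub>M I' MM) = (\<integral>\<^sup>+x. ennreal (1 - \<beta> t) * G1 x \<partial>Pi\<^sub>M I' MM) + (\<integral>\<^sup>+x. ennreal C \<partial>Pi\<^sub>M I' MM)"
      using G1m by (intro nn_integral_add) auto
    also have "(\<integral>\<^sup>+x. ennreal (1 - \<beta> t) * G1 x \<partial>Pi\<^sub>M I' MM) = ennreal (1 - \<beta> t) * (\<integral>\<^sup>+x. G1 x \<partial>Pi\<^sub>M I' MM)"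
      using G1m by (rule nn_integral_cmult)
    also have "(\<integral>\<^sup>+x. ennreal L2 * G2 x \<partial>Pi\<^sub>M I' MM) = ennreal L2 * (\<integral>\<^sup>+x. G2 x \<partial>Pi\<^sub>M I' MM)"
      using G2m by (rule nn_integral_cmult)
    also have "(\<integral>\<^sup>+x. ennreal C \<partial>Pi\<^sub>M I' MM) = ennreal C"
      by (simp add: prob_space.emeasure_space_1[OF PIp])
    finally show ?thesis unfolding e1 e2 .
  qed
  have mUcz: "\<And>k. (\<lambda>z. Uc (Xz z) k) \<in> borel_measurable (Pi\<^sub>M J MM)" using QMz by blast
  have mUpz: "\<And>k. (\<lambda>z. Up (Xz z) k) \<in> borel_measurable (Pi\<^sub>M J MM)" using QMz by blast
  have mUpiz: "\<And>k. (\<lambda>z. Upi (Xz z) k) \<in> borel_measurable (Pi\<^sub>M J MM)" using QMz by blast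
  have mUtz: "\<And>k. (\<lambda>z. Ut (Xz z) k) \<in> borel_measurable (Pi\<^sub>M J MM)" using QMz by blast
  have mVpz: "\<And>a b. (\<lambda>z. Vp (Xz z) a b) \<in> borel_measurable (Pi\<^sub>M J MM)" using QMz by blast
  have mVtz: "\<And>a b. (\<lambda>z. Vt (Xz z) a b) \<in> borel_measurable (Pi\<^sub>M J MM)" using QMz by blast
  have mJcz: "\<And>a b. (\<lambda>z. Jf i (Uc (Xz z)) a b) \<in> borel_measurable (Pi\<^sub>M J MM)" using QMz by blast
  have mJpz: "\<And>a b. (\<lambda>z. Jf i (Up (Xz z)) a b) \<in> borel_measurable (Pi\<^sub>M J MM)" using QMz by blast
  have mfcz: "\<And>k. (\<lambda>z. f i (Uc (Xz z)) k) \<in> borel_measurable (Pi\<^sub>M J MM)" using QMz by blast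
  have mfpz: "\<And>k. (\<lambda>z. f i (Up (Xz z)) k) \<in> borel_measurable (Pi\<^sub>M J MM)" using QMz by blast
  have mUcx: "\<And>k. (\<lambda>z. Uc (Xx z) k) \<in> borel_measurable (Pi\<^sub>M I' MM)" using QMx by blast
  have mUpx: "\<And>k. (\<lambda>z. Up (Xx z) k) \<in> borel_measurable (Pi\<^sub>M I' MM)" using QMx by blast
  have mUpix: "\<And>k. (\<lambda>z. Upi (Xx z) k) \<in> borel_measurable (Pi\<^sub>M I' MM)" using QMx by blast
  have mVpx: "\<And>a b. (\<lambda>z. Vp (Xx z) a b) \<in> borel_measurable (Pi\<^sub>M I' MM)" using QMx by blast
  have mJpx: "\<And>a b. (\<lambda>z. Jf i (Up (Xx z)) a b) \<in> borel_measurable (Pi\<^sub>M I' MM)" using QMx by blast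
  have mfpx: "\<And>k. (\<lambda>z. f i (Up (Xx z)) k) \<in> borel_measurable (Pi\<^sub>M I' MM)" using QMx by blast

  define g2 where "g2 z = ennreal ((vnorm (d (i - 1)) (\<lambda>k. Uc (Xz z) k - Up (Xz z) k))\<^sup>2)" for z
  define G2 where "G2 x = ennreal ((vnorm (d (i - 1)) (\<lambda>k. Uc (Xx x) k - Up (Xx x) k))\<^sup>2)" for x
  have g2_m: "g2 \<in> borel_measurable (Pi\<^sub>M J MM)" unfolding g2_def
    by (rule vn_meas, rule borel_measurable_diff) (use mUcz mUpz in auto)
  have G2_m: "G2 \<in> borel_measurable (Pi\<^sub>M I' MM)" unfolding G2_def
    by (rule vn_meas, rule borel_measurable_diff) (use mUcx mUpx in auto)
  have g2G: "g2 (x(p0 := y)) = G2 x" for x y unfolding g2_def G2_def using ag[of x y] by simp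

  define hv where "hv z = ennreal ((fnorm (d (i - 1)) (d i) (\<lambda>a b. Vt (Xz z) a b - Jf i (Uc (Xz z)) a b))\<^sup>2)" for z
  define gv where "gv z = ennreal ((fnorm (d (i - 1)) (d i) (\<lambda>a b. Vp (Xz z) a b - Jf i (Up (Xz z)) a b))\<^sup>2)" for z
  define Gv where "Gv x = ennreal ((fnorm (d (i - 1)) (d i) (\<lambda>a b. Vp (Xx x) a b - Jf i (Up (Xx x)) a b))\<^sup>2)" for x
  have hv_m: "hv \<in> borel_measurable (Pi\<^sub>M J MM)" unfolding hv_def
    by (rule fn_meas, rule borel_measurable_diff) (use mVtz mJcz in auto)
  have gv_m: "gv \<in> borel_measurable (Pi\<^sub>M J MM)" unfolding gv_def
    by (rule fn_meas, rule borel_measurable_diff) (use mVpz mJpz in auto)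
  have Gv_m: "Gv \<in> borel_measurable (Pi\<^sub>M I' MM)" unfolding Gv_def
    by (rule fn_meas, rule borel_measurable_diff) (use mVpx mJpx in auto)
  have gvG: "gv (x(p0 := y)) = Gv x" for x y unfolding gv_def Gv_def using ag[of x y] by simp
  have Vt_gen: "Vt xs = pb (d (i - 1)) (d i) Lf (\<lambda>a b. (1 - \<beta> t) * Vp xs a b + \<beta> t * Jo i (Uc xs) (xs t i) a b
      + (1 - \<beta> t) * (Jo i (Uc xs) (xs t i) a b - Jo i (Up xs) (xs t i) a b))" for xs
    unfolding Vt_def Vp_def Uc_def Up_def V_step[OF t] proj_ball_eq[OF Lf0] ..
  have pv: "(\<integral>\<^sup>+y. hv (x(p0 := y)) \<partial>MM p0) \<le> ennreal (1 - \<beta> t) * Gv x + ennreal (2 * (\<beta> t)\<^sup>2 * \<sigma>J\<^sup>2) + ennreal (2 * LcJ\<^sup>2) * G2 x" for x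
  proof -
    let ?X = "Xx x"
    let ?SS = "{..<d (i - 1)} \<times> {..<d i}"
    let ?pre = "\<lambda>y a b. (1 - \<beta> t) * Vp ?X a b + \<beta> t * Jo i (Uc ?X) y a b + (1 - \<beta> t) * (Jo i (Uc ?X) y a b - Jo i (Up ?X) y a b)"
    have Vt_eq: "Vt (Xz (x(p0 := y))) = pb (d (i - 1)) (d i) Lf (?pre y)" for y
      using Vt_gen[of "Xz (x(p0 := y))"] ag[of x y] Xzp0[of x y] by simp
    have UcX: "Uc ?X \<in> vecs (d (i - 1))" "Up ?X \<in> vecs (d (i - 1))" using vUc vUp by auto
    have JfC: "fnorm (d (i - 1)) (d i) (Jf i (Uc ?X)) \<le> Lf" using A1_bnd i UcX by auto
    have core_app: "(\<integral>\<^sup>+y. ennreal (\<Sum>k\<in>?SS. (pb (d (i - 1)) (d i) Lf (?pre y) (fst k) (snd k) - Jf i (Uc ?X) (fst k) (snd k))\<^sup>2) \<partial>D i)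
       \<le> ennreal (1 - \<beta> t) * ennreal (\<Sum>k\<in>?SS. (Vp ?X (fst k) (snd k) - Jf i (Up ?X) (fst k) (snd k))\<^sup>2)
         + ennreal (2 * (\<beta> t)\<^sup>2 * \<sigma>J\<^sup>2) + ennreal (2 * LcJ\<^sup>2) * ennreal ((vnorm (d (i - 1)) (\<lambda>k. Uc ?X k - Up ?X k))\<^sup>2)"
    proof (rule core[where P="\<lambda>y k. Jo i (Uc ?X) y (fst k) (snd k)" and Q="\<lambda>y k. Jo i (Up ?X) y (fst k) (snd k)"
        and p="\<lambda>k. Jf i (Uc ?X) (fst k) (snd k)" and q="\<lambda>k. Jf i (Up ?X) (fst k) (snd k)"])
      show "prob_space (D i)" by (rule Dip)
      show "finite ?SS" by simp
      show "0 \<le> \<beta> t" "\<beta> t \<le> 1" by (rule b01)+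
      show "\<forall>k\<in>?SS. integrable (D i) (\<lambda>y. Jo i (Uc ?X) y (fst k) (snd k)) \<and> (\<integral>y. Jo i (Uc ?X) y (fst k) (snd k) \<partial>D i) = Jf i (Uc ?X) (fst k) (snd k)"
        using A2_J_mean i UcX by auto
      show "\<forall>k\<in>?SS. integrable (D i) (\<lambda>y. Jo i (Up ?X) y (fst k) (snd k)) \<and> (\<integral>y. Jo i (Up ?X) y (fst k) (snd k) \<partial>D i) = Jf i (Up ?X) (fst k) (snd k)"
        using A2_J_mean i UcX by auto
      show "(\<integral>\<^sup>+y. ennreal (\<Sum>k\<in>?SS. (Jo i (Uc ?X) y (fst k) (snd k) - Jf i (Uc ?X) (fst k) (snd k))\<^sup>2) \<partial>D i) \<le> ennreal (\<sigma>J\<^sup>2)"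
        using A2_J_var i UcX by (auto simp: fnorm_sq')
      show "(\<integral>\<^sup>+y. ennreal (\<Sum>k\<in>?SS. (Jo i (Uc ?X) y (fst k) (snd k) - Jo i (Up ?X) y (fst k) (snd k))\<^sup>2) \<partial>D i)
          \<le> ennreal (LcJ\<^sup>2 * (vnorm (d (i - 1)) (\<lambda>k. Uc ?X k - Up ?X k))\<^sup>2)"
        using A3_J i UcX by (auto simp: fnorm_sq')
      show "\<forall>y\<in>space (D i). (\<Sum>k\<in>?SS. (pb (d (i - 1)) (d i) Lf (?pre y) (fst k) (snd k) - Jf i (Uc ?X) (fst k) (snd k))\<^sup>2)
          \<le> (\<Sum>k\<in>?SS. ((1 - \<beta> t) * (Vp ?X (fst k) (snd k) - Jf i (Up ?X) (fst k) (snd k))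
              + \<beta> t * (Jo i (Uc ?X) y (fst k) (snd k) - Jf i (Uc ?X) (fst k) (snd k))
              + (1 - \<beta> t) * (Jo i (Uc ?X) y (fst k) (snd k) - Jo i (Up ?X) y (fst k) (snd k) - Jf i (Uc ?X) (fst k) (snd k) + Jf i (Up ?X) (fst k) (snd k)))\<^sup>2)"
      proof
        fix y
        have "(fnorm (d (i - 1)) (d i) (\<lambda>a b. pb (d (i - 1)) (d i) Lf (?pre y) a b - Jf i (Uc ?X) a b))\<^sup>2
            \<le> (fnorm (d (i - 1)) (d i) (\<lambda>a b. ?pre y a b - Jf i (Uc ?X) a b))\<^sup>2"
          using pb_pyth[OF Lf0 JfC, of "?pre y"] by (smt (verit) zero_le_power2)
        moreover have "?pre y a b - Jf i (Uc ?X) a b = (1 - \<beta> t) * (Vp ?X a b - Jf i (Up ?X) a b)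
              + \<beta> t * (Jo i (Uc ?X) y a b - Jf i (Uc ?X) a b)
              + (1 - \<beta> t) * (Jo i (Uc ?X) y a b - Jo i (Up ?X) y a b - Jf i (Uc ?X) a b + Jf i (Up ?X) a b)" for a b
          by (simp add: algebra_simps)
        ultimately show "(\<Sum>k\<in>?SS. (pb (d (i - 1)) (d i) Lf (?pre y) (fst k) (snd k) - Jf i (Uc ?X) (fst k) (snd k))\<^sup>2)
          \<le> (\<Sum>k\<in>?SS. ((1 - \<beta> t) * (Vp ?X (fst k) (snd k) - Jf i (Up ?X) (fst k) (snd k))
              + \<beta> t * (Jo i (Uc ?X) y (fst k) (snd k) - Jf i (Uc ?X) (fst k) (snd k))
              + (1 - \<beta> t) * (Jo i (Uc ?X) y (fst k) (snd k) - Jo i (Up ?X) y (fst k) (snd k) - Jf i (Uc ?X) (fst k) (snd k) + Jf i (Up ?X) (fst k) (snd k)))\<^sup>2)"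
          unfolding fnorm_sq' by simp
      qed
    qed
    have lhs: "(\<integral>\<^sup>+y. hv (x(p0 := y)) \<partial>MM p0) = (\<integral>\<^sup>+y. ennreal (\<Sum>k\<in>?SS. (pb (d (i - 1)) (d i) Lf (?pre y) (fst k) (snd k) - Jf i (Uc ?X) (fst k) (snd k))\<^sup>2) \<partial>D i)"
      unfolding MMp0 hv_def using Vt_eq ag by (simp add: fnorm_sq')
    have rhs: "Gv x = ennreal (\<Sum>k\<in>?SS. (Vp ?X (fst k) (snd k) - Jf i (Up ?X) (fst k) (snd k))\<^sup>2)"
      unfolding Gv_def fnorm_sq' ..
    show ?thesis using core_app unfolding lhs rhs G2_def .
  qed
  have Vfin: "(\<integral>\<^sup>+\<omega>. hv (Xi \<omega>) \<partial>M) \<le> ennreal (1 - \<beta> t) * (\<integral>\<^sup>+\<omega>. gv (Xi \<omega>) \<partial>M)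
      + ennreal (2 * (\<beta> t)\<^sup>2 * \<sigma>J\<^sup>2) + ennreal (2 * LcJ\<^sup>2) * (\<integral>\<^sup>+\<omega>. g2 (Xi \<omega>) \<partial>M)"
    by (rule final[OF hv_m gv_m g2_m Gv_m G2_m gvG g2G pv])
  have V: "(\<integral>\<^sup>+\<omega>. ennreal ((fnorm (d (i - 1)) (d i) (\<lambda>j k. v t i \<omega> j k - Jf i (u t (i - 1) \<omega>) j k))\<^sup>2) \<partial>M)
       \<le> ennreal (1 - \<beta> t) *
           (\<integral>\<^sup>+\<omega>. ennreal ((fnorm (d (i - 1)) (d i)
               (\<lambda>j k. v (t - 1) i \<omega> j k - Jf i (u (t - 1) (i - 1) \<omega>) j k))\<^sup>2) \<partial>M)
         + ennreal (2 * (\<beta> t)\<^sup>2 * \<sigma>J\<^sup>2)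
         + ennreal (2 * LcJ\<^sup>2) *
           (\<integral>\<^sup>+\<omega>. ennreal ((vnorm (d (i - 1)) (\<lambda>k. u t (i - 1) \<omega> k - u (t - 1) (i - 1) \<omega> k))\<^sup>2) \<partial>M)"
    using Vfin by (simp add: hv_def gv_def g2_def cv)

  define hu where "hu z = ennreal ((vnorm (d i) (\<lambda>k. Ut (Xz z) k - f i (Uc (Xz z)) k))\<^sup>2)" for z
  define gu where "gu z = ennreal ((vnorm (d i) (\<lambda>k. Upi (Xz z) k - f i (Up (Xz z)) k))\<^sup>2)" for z
  define Gu where "Gu x = ennreal ((vnorm (d i) (\<lambda>k. Upi (Xx x) k - f i (Up (Xx x)) k))\<^sup>2)" for x
  have hu_m: "hu \<in> borel_measurable (Pi\<^sub>M J MM)" unfolding hu_def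
    by (rule vn_meas, rule borel_measurable_diff) (use mUtz mfcz in auto)
  have gu_m: "gu \<in> borel_measurable (Pi\<^sub>M J MM)" unfolding gu_def
    by (rule vn_meas, rule borel_measurable_diff) (use mUpiz mfpz in auto)
  have Gu_m: "Gu \<in> borel_measurable (Pi\<^sub>M I' MM)" unfolding Gu_def
    by (rule vn_meas, rule borel_measurable_diff) (use mUpix mfpx in auto)
  have guG: "gu (x(p0 := y)) = Gu x" for x y unfolding gu_def Gu_def using ag[of x y] by simp
  have Ut_gen: "Ut xs = (\<lambda>k. (1 - \<beta> t) * Upi xs k + \<beta> t * fo i (Uc xs) (xs t i) k
      + (1 - \<beta> t) * (fo i (Uc xs) (xs t i) k - fo i (Up xs) (xs t i) k))" for xs
    unfolding Ut_def Upi_def Uc_def Up_def by (rule U_step[OF t i1(1)])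
  have pu: "(\<integral>\<^sup>+y. hu (x(p0 := y)) \<partial>MM p0) \<le> ennreal (1 - \<beta> t) * Gu x + ennreal (2 * (\<beta> t)\<^sup>2 * \<sigma>f\<^sup>2) + ennreal (2 * Lcf\<^sup>2) * G2 x" for x
  proof -
    let ?X = "Xx x"
    let ?SS = "{..<d i}"
    let ?pre = "\<lambda>y k. (1 - \<beta> t) * Upi ?X k + \<beta> t * fo i (Uc ?X) y k + (1 - \<beta> t) * (fo i (Uc ?X) y k - fo i (Up ?X) y k)"
    have Ut_eq: "Ut (Xz (x(p0 := y))) = ?pre y" for y
      using Ut_gen[of "Xz (x(p0 := y))"] ag[of x y] Xzp0[of x y] by simp
    have UcX: "Uc ?X \<in> vecs (d (i - 1))" "Up ?X \<in> vecs (d (i - 1))" using vUc vUp by auto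
    have core_app: "(\<integral>\<^sup>+y. ennreal (\<Sum>k\<in>?SS. (?pre y k - f i (Uc ?X) k)\<^sup>2) \<partial>D i)
       \<le> ennreal (1 - \<beta> t) * ennreal (\<Sum>k\<in>?SS. (Upi ?X k - f i (Up ?X) k)\<^sup>2)
         + ennreal (2 * (\<beta> t)\<^sup>2 * \<sigma>f\<^sup>2) + ennreal (2 * Lcf\<^sup>2) * ennreal ((vnorm (d (i - 1)) (\<lambda>k. Uc ?X k - Up ?X k))\<^sup>2)"
    proof (rule core[where P="\<lambda>y k. fo i (Uc ?X) y k" and Q="\<lambda>y k. fo i (Up ?X) y k"
        and p="\<lambda>k. f i (Uc ?X) k" and q="\<lambda>k. f i (Up ?X) k"])
      show "prob_space (D i)" by (rule Dip)
      show "finite ?SS" by simp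
      show "0 \<le> \<beta> t" "\<beta> t \<le> 1" by (rule b01)+
      show "\<forall>k\<in>?SS. integrable (D i) (\<lambda>y. fo i (Uc ?X) y k) \<and> (\<integral>y. fo i (Uc ?X) y k \<partial>D i) = f i (Uc ?X) k"
        using A2_f_mean i UcX by auto
      show "\<forall>k\<in>?SS. integrable (D i) (\<lambda>y. fo i (Up ?X) y k) \<and> (\<integral>y. fo i (Up ?X) y k \<partial>D i) = f i (Up ?X) k"
        using A2_f_mean i UcX by auto
      show "(\<integral>\<^sup>+y. ennreal (\<Sum>k\<in>?SS. (fo i (Uc ?X) y k - f i (Uc ?X) k)\<^sup>2) \<partial>D i) \<le> ennreal (\<sigma>f\<^sup>2)"
        using A2_f_var i UcX by (auto simp: vnorm_sq)
      show "(\<integral>\<^sup>+y. ennreal (\<Sum>k\<in>?SS. (fo i (Uc ?X) y k - fo i (Up ?X) y k)\<^sup>2) \<partial>D i)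
          \<le> ennreal (Lcf\<^sup>2 * (vnorm (d (i - 1)) (\<lambda>k. Uc ?X k - Up ?X k))\<^sup>2)"
        using A3_f i UcX by (auto simp: vnorm_sq)
      show "\<forall>y\<in>space (D i). (\<Sum>k\<in>?SS. (?pre y k - f i (Uc ?X) k)\<^sup>2)
          \<le> (\<Sum>k\<in>?SS. ((1 - \<beta> t) * (Upi ?X k - f i (Up ?X) k)
              + \<beta> t * (fo i (Uc ?X) y k - f i (Uc ?X) k)
              + (1 - \<beta> t) * (fo i (Uc ?X) y k - fo i (Up ?X) y k - f i (Uc ?X) k + f i (Up ?X) k))\<^sup>2)"
      proof
        fix y
        have "?pre y k - f i (Uc ?X) k = (1 - \<beta> t) * (Upi ?X k - f i (Up ?X) k)
              + \<beta> t * (fo i (Uc ?X) y k - f i (Uc ?X) k)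
              + (1 - \<beta> t) * (fo i (Uc ?X) y k - fo i (Up ?X) y k - f i (Uc ?X) k + f i (Up ?X) k)" for k
          by (simp add: algebra_simps)
        then show "(\<Sum>k\<in>?SS. (?pre y k - f i (Uc ?X) k)\<^sup>2)
          \<le> (\<Sum>k\<in>?SS. ((1 - \<beta> t) * (Upi ?X k - f i (Up ?X) k)
              + \<beta> t * (fo i (Uc ?X) y k - f i (Uc ?X) k)
              + (1 - \<beta> t) * (fo i (Uc ?X) y k - fo i (Up ?X) y k - f i (Uc ?X) k + f i (Up ?X) k))\<^sup>2)"
          by simp
      qed
    qed
    have lhs: "(\<integral>\<^sup>+y. hu (x(p0 := y)) \<partial>MM p0) = (\<integral>\<^sup>+y. ennreal (\<Sum>k\<in>?SS. (?pre y k - f i (Uc ?X) k)\<^sup>2) \<partial>D i)"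
      unfolding MMp0 hu_def using Ut_eq ag by (simp add: vnorm_sq)
    have rhs: "Gu x = ennreal (\<Sum>k\<in>?SS. (Upi ?X k - f i (Up ?X) k)\<^sup>2)"
      unfolding Gu_def vnorm_sq ..
    show ?thesis using core_app unfolding lhs rhs G2_def .
  qed
  have Ufin: "(\<integral>\<^sup>+\<omega>. hu (Xi \<omega>) \<partial>M) \<le> ennreal (1 - \<beta> t) * (\<integral>\<^sup>+\<omega>. gu (Xi \<omega>) \<partial>M)
      + ennreal (2 * (\<beta> t)\<^sup>2 * \<sigma>f\<^sup>2) + ennreal (2 * Lcf\<^sup>2) * (\<integral>\<^sup>+\<omega>. g2 (Xi \<omega>) \<partial>M)"
    by (rule final[OF hu_m gu_m g2_m Gu_m G2_m guG g2G pu])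
  have U: "(\<integral>\<^sup>+\<omega>. ennreal ((vnorm (d i) (\<lambda>k. u t i \<omega> k - f i (u t (i - 1) \<omega>) k))\<^sup>2) \<partial>M)
       \<le> ennreal (1 - \<beta> t) *
           (\<integral>\<^sup>+\<omega>. ennreal ((vnorm (d i) (\<lambda>k. u (t - 1) i \<omega> k - f i (u (t - 1) (i - 1) \<omega>) k))\<^sup>2) \<partial>M)
         + ennreal (2 * (\<beta> t)\<^sup>2 * \<sigma>f\<^sup>2)
         + ennreal (2 * Lcf\<^sup>2) *
           (\<integral>\<^sup>+\<omega>. ennreal ((vnorm (d (i - 1)) (\<lambda>k. u t (i - 1) \<omega> k - u (t - 1) (i - 1) \<omega> k))\<^sup>2) \<partial>M)"
    using Ufin by (simp add: hu_def gu_def g2_def cv)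
  show "(\<integral>\<^sup>+\<omega>. ennreal ((fnorm (d (i - 1)) (d i) (\<lambda>j k. v t i \<omega> j k - Jf i (u t (i - 1) \<omega>) j k))\<^sup>2) \<partial>M)
       \<le> ennreal (1 - \<beta> t) *
           (\<integral>\<^sup>+\<omega>. ennreal ((fnorm (d (i - 1)) (d i)
               (\<lambda>j k. v (t - 1) i \<omega> j k - Jf i (u (t - 1) (i - 1) \<omega>) j k))\<^sup>2) \<partial>M)
         + ennreal (2 * (\<beta> t)\<^sup>2 * \<sigma>J\<^sup>2)
         + ennreal (2 * LcJ\<^sup>2) *
           (\<integral>\<^sup>+\<omega>. ennreal ((vnorm (d (i - 1)) (\<lambda>k. u t (i - 1) \<omega> k - u (t - 1) (i - 1) \<omega> k))\<^sup>2) \<partial>M) \<and> (\<integral>\<^sup>+\<omega>. ennreal ((vnorm (d i) (\<lambda>k. u t i \<omega> k - f i (u t (i - 1) \<omega>) k))\<^sup>2) \<partial>M)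
       \<le> ennreal (1 - \<beta> t) *
           (\<integral>\<^sup>+\<omega>. ennreal ((vnorm (d i) (\<lambda>k. u (t - 1) i \<omega> k - f i (u (t - 1) (i - 1) \<omega>) k))\<^sup>2) \<partial>M)
         + ennreal (2 * (\<beta> t)\<^sup>2 * \<sigma>f\<^sup>2)
         + ennreal (2 * Lcf\<^sup>2) *
           (\<integral>\<^sup>+\<omega>. ennreal ((vnorm (d (i - 1)) (\<lambda>k. u t (i - 1) \<omega> k - u (t - 1) (i - 1) \<omega> k))\<^sup>2) \<partial>M)"
    using V U by blast
qed

end
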